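(* Let $E$ be a finite non-abelian $p$-group of nilpotency class $2$ with cyclic centre. For $n\ge0$ let $E_n=E^{p^n}$ with coordinates indexed by $1,\dots,p^n$, $Z_n=Z(E_n)$, $F_n=\{(x^{(i)})\in Z_n:x^{(1)}\cdots x^{(p^n)}=1\}$, $K_n=E_n/F_n$, $L_n=Z_n/F_n$. Let $J_n=K_n\rtimes\langle\alpha_n\rangle$, where $\alpha_n$ has order $p^n$ and acts by the cyclic shift induced from $E_n$: conjugation by $\alpha_n$ sends $x=(x^{(i)})$ to $y$ with $y^{(i)}=x^{(i-1)}$, indices mod $p^n$ in $\{1,\dots,p^n\}$ (so $J_n$ is the wreath-central product of $E$ with $C_{p^n}$). For $n\ge1$ define $\varphi_n:E_n\to E_{n-1}$ by letting the $i$-th coordinate of $\varphi_n(x)$ be $\prod_{r\equiv i\ (\mathrm{mod}\ p^{n-1})}x^{(r)}$, factors in increasing order of $r$. Then $\varphi_n$ induces a homomorphism $\psi_n:K_n/L_n\cong E_n/Z_n\to E_{n-1}/Z_{n-1}\cong K_{n-1}/L_{n-1}$, and $\psi_n$ extends, via $\psi_n(\alpha_n)=\alpha_{n-1}$, to a homomorphism $J_n/L_n\to J_{n-1}/L_{n-1}$. *)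

theory Defs
  imports "HOL-Algebra.Algebra"
begin

definition grp_center :: "('a, 'b) monoid_scheme \<Rightarrow> 'a set" where
  "grp_center G = {z \<in> carrier G. \<forall>x \<in> carrier G. z \<otimes>\<^bsub>G\<^esub> x = x \<otimes>\<^bsub>G\<^esub> z}"

definition nilpotency_class_two :: "('a, 'b) monoid_scheme \<Rightarrow> bool" where
  "nilpotency_class_two G \<longleftrightarrow>
     \<not> comm_group G \<and>
     (\<forall>x \<in> carrier G. \<forall>y \<in> carrier G.
        x \<otimes>\<^bsub>G\<^esub> y \<otimes>\<^bsub>G\<^esub> inv\<^bsub>G\<^esub> x \<otimes>\<^bsub>G\<^esub> inv\<^bsub>G\<^esub> y \<in> grp_center G)"

(* E_n = E^{p^n}, coordinates indexed by 0..p^n-1 (paper: 1..p^n) *)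
definition En :: "('a, 'b) monoid_scheme \<Rightarrow> nat \<Rightarrow> nat \<Rightarrow> (nat \<Rightarrow> 'a) monoid" where
  "En E p n = product_group {..<p ^ n} (\<lambda>_. E)"

definition Zn :: "('a, 'b) monoid_scheme \<Rightarrow> nat \<Rightarrow> nat \<Rightarrow> (nat \<Rightarrow> 'a) set" where
  "Zn E p n = grp_center (En E p n)"

definition Fn :: "('a, 'b) monoid_scheme \<Rightarrow> nat \<Rightarrow> nat \<Rightarrow> (nat \<Rightarrow> 'a) set" where
  "Fn E p n = {x \<in> Zn E p n. foldr (\<otimes>\<^bsub>E\<^esub>) (map x [0..<p ^ n]) \<one>\<^bsub>E\<^esub> = \<one>\<^bsub>E\<^esub>}"

definition Kn :: "('a, 'b) monoid_scheme \<Rightarrow> nat \<Rightarrow> nat \<Rightarrow> (nat \<Rightarrow> 'a) set monoid" where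
  "Kn E p n = En E p n Mod Fn E p n"

definition shift :: "nat \<Rightarrow> nat \<Rightarrow> (nat \<Rightarrow> 'a) \<Rightarrow> (nat \<Rightarrow> 'a)" where
  "shift p n x = (\<lambda>i \<in> {..<p ^ n}. x ((i + p ^ n - 1) mod p ^ n))"

(* semidirect product K \<rtimes> C_m, where the generator alpha acts on K by sigma:
   elements (a, i) stand for a * alpha^i, and (a,i)(b,j) = (a * sigma^i(b), i+j mod m) *)
definition semidirect_cyclic ::
  "('k, 'c) monoid_scheme \<Rightarrow> ('k \<Rightarrow> 'k) \<Rightarrow> nat \<Rightarrow> ('k \<times> nat) monoid" where
  "semidirect_cyclic K \<sigma> m =
     \<lparr>carrier = carrier K \<times> {..<m},
      monoid.mult = (\<lambda>(a, i) (b, j). (a \<otimes>\<^bsub>K\<^esub> (\<sigma> ^^ i) b, (i + j) mod m)),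
      one = (\<one>\<^bsub>K\<^esub>, 0)\<rparr>"

definition Jn :: "('a, 'b) monoid_scheme \<Rightarrow> nat \<Rightarrow> nat \<Rightarrow> ((nat \<Rightarrow> 'a) set \<times> nat) monoid" where
  "Jn E p n = semidirect_cyclic (Kn E p n) (\<lambda>B. shift p n ` B) (p ^ n)"

definition alpha :: "('a, 'b) monoid_scheme \<Rightarrow> nat \<Rightarrow> nat \<Rightarrow> (nat \<Rightarrow> 'a) set \<times> nat" where
  "alpha E p n = (Fn E p n, 1 mod p ^ n)"

definition inK :: "('a, 'b) monoid_scheme \<Rightarrow> nat \<Rightarrow> nat \<Rightarrow> (nat \<Rightarrow> 'a) \<Rightarrow> (nat \<Rightarrow> 'a) set \<times> nat" where
  "inK E p n x = (Fn E p n #>\<^bsub>En E p n\<^esub> x, 0)"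

definition Ln :: "('a, 'b) monoid_scheme \<Rightarrow> nat \<Rightarrow> nat \<Rightarrow> ((nat \<Rightarrow> 'a) set \<times> nat) set" where
  "Ln E p n = inK E p n ` Zn E p n"

definition phi :: "('a, 'b) monoid_scheme \<Rightarrow> nat \<Rightarrow> nat \<Rightarrow> (nat \<Rightarrow> 'a) \<Rightarrow> (nat \<Rightarrow> 'a)" where
  "phi E p n x = (\<lambda>i \<in> {..<p ^ (n - 1)}.
       foldr (\<otimes>\<^bsub>E\<^esub>) (map (\<lambda>j. x (i + j * p ^ (n - 1))) [0..<p]) \<one>\<^bsub>E\<^esub>)"

end

theory Submission
  imports Defs
begin

lemma quot_hom:
  assumes G: "group G" and H: "group H" and N: "N \<lhd> G" and M: "M \<lhd> H"
  and f: "f \<in> carrier G \<rightarrow> carrier H"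
  and fm: "\<And>x y. x\<in>carrier G \<Longrightarrow> y \<in> carrier G \<Longrightarrow>
      M #>\<^bsub>H\<^esub> f (x \<otimes>\<^bsub>G\<^esub> y) = M #>\<^bsub>H\<^esub> (f x \<otimes>\<^bsub>H\<^esub> f y)"
  and fN: "\<And>x. x \<in> N \<Longrightarrow> f x \<in> M"
  shows "\<exists>\<psi>\<in>hom (G Mod N) (H Mod M). \<forall>x\<in>carrier G. \<psi> (N #>\<^bsub>G\<^esub> x) = M #>\<^bsub>H\<^esub> f x"
proof -
  interpret G: group G by fact
  interpret H: group H by fact
  interpret N: normal N G by fact
  interpret M: normal M H by fact
  have key: "M #>\<^bsub>H\<^esub> f x = M #>\<^bsub>H\<^esub> f y"
    if "x \<in> carrier G" "y \<in> carrier G" "N #>\<^bsub>G\<^esub> x = N #>\<^bsub>G\<^esub> y" for x y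
  proof -
    have "x \<in> N #>\<^bsub>G\<^esub> y" using that G.rcos_self N.subgroup_axioms by metis
    then obtain n where n: "n \<in> N" "x = n \<otimes>\<^bsub>G\<^esub> y" unfolding r_coset_def by auto
    have nc: "n \<in> carrier G" using n N.subset by auto
    have fnM: "f n \<in> M" using fN n by auto
    have "M #>\<^bsub>H\<^esub> f x = M #>\<^bsub>H\<^esub> (f n \<otimes>\<^bsub>H\<^esub> f y)" using fm n nc that by auto
    also have "\<dots> = (M #>\<^bsub>H\<^esub> f n) #>\<^bsub>H\<^esub> f y"
      using H.coset_mult_assoc M.subset f nc that by (metis funcset_mem)
    also have "\<dots> = M #>\<^bsub>H\<^esub> f y" using H.coset_join2 fnM M.subgroup_axioms M.subset by auto
    finally show ?thesis .
  qed
  define rep where "rep A = (SOME x. x \<in> carrier G \<and> A = N #>\<^bsub>G\<^esub> x)" for A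
  have rep: "rep (N #>\<^bsub>G\<^esub> x) \<in> carrier G \<and> N #>\<^bsub>G\<^esub> x = N #>\<^bsub>G\<^esub> rep (N #>\<^bsub>G\<^esub> x)"
    if "x \<in> carrier G" for x
    unfolding rep_def by (rule someI[of _ x]) (use that in auto)
  define \<psi> where "\<psi> A = M #>\<^bsub>H\<^esub> f (rep A)" for A
  have psi: "\<psi> (N #>\<^bsub>G\<^esub> x) = M #>\<^bsub>H\<^esub> f x" if "x \<in> carrier G" for x
    unfolding \<psi>_def using key rep that by metis
  have "\<psi> \<in> hom (G Mod N) (H Mod M)"
  proof (rule homI)
    fix A assume "A \<in> carrier (G Mod N)"
    then obtain x where x: "x \<in> carrier G" "A = N #>\<^bsub>G\<^esub> x"
      unfolding FactGroup_def RCOSETS_def by auto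
    show "\<psi> A \<in> carrier (H Mod M)" using x psi f
      by (auto simp: FactGroup_def intro!: H.rcosetsI M.subset)
  next
    fix A B assume "A \<in> carrier (G Mod N)" "B \<in> carrier (G Mod N)"
    then obtain x y where x: "x \<in> carrier G" "A = N #>\<^bsub>G\<^esub> x"
      and y: "y \<in> carrier G" "B = N #>\<^bsub>G\<^esub> y"
      unfolding FactGroup_def RCOSETS_def by auto
    have "A \<otimes>\<^bsub>G Mod N\<^esub> B = N #>\<^bsub>G\<^esub> (x \<otimes>\<^bsub>G\<^esub> y)"
      using x y N.rcos_sum by (simp add: FactGroup_def)
    then have "\<psi> (A \<otimes>\<^bsub>G Mod N\<^esub> B) = M #>\<^bsub>H\<^esub> (f x \<otimes>\<^bsub>H\<^esub> f y)"
      using psi fm x y by simp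
    also have "\<dots> = \<psi> A \<otimes>\<^bsub>H Mod M\<^esub> \<psi> B"
      using psi x y f M.rcos_sum by (simp add: FactGroup_def funcset_mem)
    finally show "\<psi> (A \<otimes>\<^bsub>G Mod N\<^esub> B) = \<psi> A \<otimes>\<^bsub>H Mod M\<^esub> \<psi> B" .
  qed
  then show ?thesis using psi by blast
qed

lemma funpow_mod_eq:
  assumes per: "\<And>a. a \<in> S \<Longrightarrow> (\<sigma>^^m) a = a" and cl: "\<And>a. a \<in> S \<Longrightarrow> \<sigma> a \<in> S"
    and a: "a \<in> S"
  shows "(\<sigma>^^(k mod m)) a = (\<sigma>^^k) a"
proof -
  have clk: "(\<sigma>^^j) b \<in> S" if "b \<in> S" for j b
    using that by (induction j) (auto simp: cl)
  have q: "(\<sigma>^^(q*m)) b = b" if "b \<in> S" for q b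
    using that
  proof (induction q)
    case (Suc q)
    have "(\<sigma>^^(Suc q * m)) b = (\<sigma>^^m) ((\<sigma>^^(q*m)) b)"
      by (simp add: funpow_add)
    then show ?case using Suc per by simp
  qed simp
  have "k = k mod m + (k div m) * m" by simp
  then have "(\<sigma>^^k) a = (\<sigma>^^(k mod m)) ((\<sigma>^^((k div m)*m)) a)"
    by (metis funpow_add o_apply)
  then show ?thesis using q a by simp
qed

lemma semidirect_mult:
  "(a, i) \<otimes>\<^bsub>semidirect_cyclic K \<sigma> m\<^esub> (b, j) = (a \<otimes>\<^bsub>K\<^esub> (\<sigma>^^i) b, (i + j) mod m)"
  by (simp add: semidirect_cyclic_def)

lemma semidirect_carrier: "carrier (semidirect_cyclic K \<sigma> m) = carrier K \<times> {..<m}"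
  by (simp add: semidirect_cyclic_def)

lemma semidirect_one: "\<one>\<^bsub>semidirect_cyclic K \<sigma> m\<^esub> = (\<one>\<^bsub>K\<^esub>, 0)"
  by (simp add: semidirect_cyclic_def)

locale sdc =
  fixes K :: "('k, 'c) monoid_scheme" and \<sigma> and m :: nat
  assumes K: "group K" and m: "m > 0"
  and \<sigma>c: "\<And>a. a \<in> carrier K \<Longrightarrow> \<sigma> a \<in> carrier K"
  and \<sigma>m: "\<And>a b. a\<in>carrier K \<Longrightarrow> b\<in>carrier K \<Longrightarrow> \<sigma> (a \<otimes>\<^bsub>K\<^esub> b) = \<sigma> a \<otimes>\<^bsub>K\<^esub> \<sigma> b"
  and \<sigma>per: "\<And>a. a \<in> carrier K \<Longrightarrow> (\<sigma>^^m) a = a"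
begin

interpretation K: group K by (rule K)

lemma pc: "a \<in> carrier K \<Longrightarrow> (\<sigma>^^i) a \<in> carrier K"
  by (induction i) (auto simp: \<sigma>c)

lemma pm: "a\<in>carrier K \<Longrightarrow> b\<in>carrier K \<Longrightarrow> (\<sigma>^^i) (a \<otimes>\<^bsub>K\<^esub> b) = (\<sigma>^^i) a \<otimes>\<^bsub>K\<^esub> (\<sigma>^^i) b"
  by (induction i) (auto simp: \<sigma>m pc)

lemma p1: "(\<sigma>^^i) \<one>\<^bsub>K\<^esub> = \<one>\<^bsub>K\<^esub>"
proof -
  have "\<sigma> \<one>\<^bsub>K\<^esub> \<otimes>\<^bsub>K\<^esub> \<sigma> \<one>\<^bsub>K\<^esub> = \<one>\<^bsub>K\<^esub> \<otimes>\<^bsub>K\<^esub> \<sigma> \<one>\<^bsub>K\<^esub>"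
    using \<sigma>m[of "\<one>\<^bsub>K\<^esub>" "\<one>\<^bsub>K\<^esub>"] \<sigma>c by simp
  then have "\<sigma> \<one>\<^bsub>K\<^esub> = \<one>\<^bsub>K\<^esub>" using K.r_cancel \<sigma>c by (metis K.one_closed)
  then show ?thesis by (induction i) auto
qed

lemma pmod: "a \<in> carrier K \<Longrightarrow> (\<sigma>^^(k mod m)) a = (\<sigma>^^k) a"
  by (rule funpow_mod_eq[where S="carrier K"]) (auto simp: \<sigma>per \<sigma>c)

lemma grp: "group (semidirect_cyclic K \<sigma> m)"
proof (rule groupI)
  fix x y assume "x \<in> carrier (semidirect_cyclic K \<sigma> m)" "y \<in> carrier (semidirect_cyclic K \<sigma> m)"
  then show "x \<otimes>\<^bsub>semidirect_cyclic K \<sigma> m\<^esub> y \<in> carrier (semidirect_cyclic K \<sigma> m)"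
    using m by (cases x, cases y) (auto simp: semidirect_mult semidirect_carrier pc)
next
  show "\<one>\<^bsub>semidirect_cyclic K \<sigma> m\<^esub> \<in> carrier (semidirect_cyclic K \<sigma> m)"
    using m by (simp add: semidirect_one semidirect_carrier)
next
  fix x y z assume "x \<in> carrier (semidirect_cyclic K \<sigma> m)" "y \<in> carrier (semidirect_cyclic K \<sigma> m)"
    "z \<in> carrier (semidirect_cyclic K \<sigma> m)"
  then obtain a i b j c k where x: "x = (a, i)" "a \<in> carrier K" and y: "y = (b, j)" "b \<in> carrier K"
    and z: "z = (c, k)" "c \<in> carrier K"
    by (auto simp: semidirect_carrier)
  have "(\<sigma>^^((i + j) mod m)) c = (\<sigma>^^i) ((\<sigma>^^j) c)"
    using pmod z by (simp add: funpow_add)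
  moreover have "((i + j) mod m + k) mod m = (i + (j + k) mod m) mod m"
    by (simp add: mod_add_left_eq mod_add_right_eq add.assoc)
  ultimately show "x \<otimes>\<^bsub>semidirect_cyclic K \<sigma> m\<^esub> y \<otimes>\<^bsub>semidirect_cyclic K \<sigma> m\<^esub> z =
      x \<otimes>\<^bsub>semidirect_cyclic K \<sigma> m\<^esub> (y \<otimes>\<^bsub>semidirect_cyclic K \<sigma> m\<^esub> z)"
    using x y z by (simp add: semidirect_mult pm pc K.m_assoc)
next
  fix x assume "x \<in> carrier (semidirect_cyclic K \<sigma> m)"
  then show "\<one>\<^bsub>semidirect_cyclic K \<sigma> m\<^esub> \<otimes>\<^bsub>semidirect_cyclic K \<sigma> m\<^esub> x = x"
    by (cases x) (auto simp: semidirect_mult semidirect_one semidirect_carrier)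
next
  fix x assume "x \<in> carrier (semidirect_cyclic K \<sigma> m)"
  then obtain a i where x: "x = (a, i)" "a \<in> carrier K" "i < m"
    by (auto simp: semidirect_carrier)
  let ?y = "((\<sigma>^^((m-i) mod m)) (inv\<^bsub>K\<^esub> a), (m-i) mod m)"
  have "?y \<otimes>\<^bsub>semidirect_cyclic K \<sigma> m\<^esub> x = \<one>\<^bsub>semidirect_cyclic K \<sigma> m\<^esub>"
  proof -
    have "((m - i) mod m + i) mod m = 0"
      using x(3) by (cases "i = 0") auto
    then show ?thesis using x
      by (simp add: semidirect_mult semidirect_one pm[symmetric] p1)
  qed
  moreover have "?y \<in> carrier (semidirect_cyclic K \<sigma> m)"
    using x m by (simp add: semidirect_carrier pc)
  ultimately show "\<exists>y\<in>carrier (semidirect_cyclic K \<sigma> m). y \<otimes>\<^bsub>semidirect_cyclic K \<sigma> m\<^esub> x = \<one>\<^bsub>semidirect_cyclic K \<sigma> m\<^esub>"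
    by blast
qed

lemma nrm:
  assumes S: "subgroup S K"
    and central: "\<And>s a. s\<in>S \<Longrightarrow> a\<in>carrier K \<Longrightarrow> s \<otimes>\<^bsub>K\<^esub> a = a \<otimes>\<^bsub>K\<^esub> s"
    and \<sigma>S: "\<And>s. s\<in>S \<Longrightarrow> \<sigma> s \<in> S"
  shows "(\<lambda>s. (s, 0::nat)) ` S \<lhd> semidirect_cyclic K \<sigma> m"
proof -
  interpret J: group "semidirect_cyclic K \<sigma> m" by (rule grp)
  interpret S: subgroup S K by (rule S)
  have pS: "(\<sigma>^^i) s \<in> S" if "s \<in> S" for i s
    using that by (induction i) (auto simp: \<sigma>S)
  have sub: "subgroup ((\<lambda>s. (s, 0::nat)) ` S) (semidirect_cyclic K \<sigma> m)"
  proof (rule J.subgroupI)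
    show "(\<lambda>s. (s, 0::nat)) ` S \<subseteq> carrier (semidirect_cyclic K \<sigma> m)"
      using m by (auto simp: semidirect_carrier)
    show "(\<lambda>s. (s, 0::nat)) ` S \<noteq> {}" using subgroup.one_closed[OF S] by blast
  next
    fix x assume "x \<in> (\<lambda>s. (s, 0::nat)) ` S"
    then obtain s where s: "x = (s, 0)" "s \<in> S" by auto
    have "inv\<^bsub>semidirect_cyclic K \<sigma> m\<^esub> (s, 0) = (inv\<^bsub>K\<^esub> s, 0)"
      using s m by (intro J.inv_equality) (auto simp: semidirect_mult semidirect_one semidirect_carrier)
    then show "inv\<^bsub>semidirect_cyclic K \<sigma> m\<^esub> x \<in> (\<lambda>s. (s, 0::nat)) ` S" using s by auto
  next
    fix x y assume "x \<in> (\<lambda>s. (s, 0::nat)) ` S" "y \<in> (\<lambda>s. (s, 0::nat)) ` S"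
    then show "x \<otimes>\<^bsub>semidirect_cyclic K \<sigma> m\<^esub> y \<in> (\<lambda>s. (s, 0::nat)) ` S"
      by (auto simp: semidirect_mult)
  qed
  show ?thesis
  proof (rule J.normalI[OF sub], intro ballI)
    fix x assume "x \<in> carrier (semidirect_cyclic K \<sigma> m)"
    then obtain a i where x: "x = (a, i)" "a \<in> carrier K" "i < m"
      by (auto simp: semidirect_carrier)
    show "(\<lambda>s. (s, 0::nat)) ` S #>\<^bsub>semidirect_cyclic K \<sigma> m\<^esub> x = x <#\<^bsub>semidirect_cyclic K \<sigma> m\<^esub> (\<lambda>s. (s, 0::nat)) ` S"
    proof
      show "(\<lambda>s. (s, 0::nat)) ` S #>\<^bsub>semidirect_cyclic K \<sigma> m\<^esub> x \<subseteq> x <#\<^bsub>semidirect_cyclic K \<sigma> m\<^esub> (\<lambda>s. (s, 0::nat)) ` S"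
      proof
        fix u assume "u \<in> (\<lambda>s. (s, 0::nat)) ` S #>\<^bsub>semidirect_cyclic K \<sigma> m\<^esub> x"
        then obtain s where s: "s \<in> S" "u = (s \<otimes>\<^bsub>K\<^esub> a, i)"
          using x by (auto simp: r_coset_def semidirect_mult)
        define t where "t = (\<sigma>^^(m - i)) s"
        have "(\<sigma>^^i) t = (\<sigma>^^m) s" using x(3) unfolding t_def
          by (metis funpow_add o_apply le_add_diff_inverse less_imp_le)
        then have "(\<sigma>^^i) t = s" using \<sigma>per s by auto
        then have "u = (a \<otimes>\<^bsub>K\<^esub> (\<sigma>^^i) t, i mod m)" using s central x by simp
        moreover have "t \<in> S" using pS s t_def by auto
        ultimately show "u \<in> x <#\<^bsub>semidirect_cyclic K \<sigma> m\<^esub> (\<lambda>s. (s, 0::nat)) ` S"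
          using x by (auto simp: l_coset_def semidirect_mult)
      qed
    next
      show "x <#\<^bsub>semidirect_cyclic K \<sigma> m\<^esub> (\<lambda>s. (s, 0::nat)) ` S \<subseteq> (\<lambda>s. (s, 0::nat)) ` S #>\<^bsub>semidirect_cyclic K \<sigma> m\<^esub> x"
      proof
        fix u assume "u \<in> x <#\<^bsub>semidirect_cyclic K \<sigma> m\<^esub> (\<lambda>s. (s, 0::nat)) ` S"
        then obtain s where s: "s \<in> S" "u = (a \<otimes>\<^bsub>K\<^esub> (\<sigma>^^i) s, i)"
          using x by (auto simp: l_coset_def semidirect_mult)
        then have "u = ((\<sigma>^^i) s \<otimes>\<^bsub>K\<^esub> a, (0 + i) mod m)" using central pS x by simp
        then show "u \<in> (\<lambda>s. (s, 0::nat)) ` S #>\<^bsub>semidirect_cyclic K \<sigma> m\<^esub> x"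
          using x pS s by (auto simp: r_coset_def semidirect_mult)
      qed
    qed
  qed
qed

end

lemma central_normal:
  assumes "group G" "subgroup H G" "\<And>h x. h \<in> H \<Longrightarrow> x \<in> carrier G \<Longrightarrow> h \<otimes>\<^bsub>G\<^esub> x = x \<otimes>\<^bsub>G\<^esub> h"
  shows "H \<lhd> G"
proof -
  interpret group G by fact
  show ?thesis
    using assms(2,3) by (intro normalI) (auto simp: r_coset_def l_coset_def)
qed

context group
begin

lemma cen_carrier: "z \<in> grp_center G \<Longrightarrow> z \<in> carrier G" by (simp add: grp_center_def)
lemma cen_comm: "z \<in> grp_center G \<Longrightarrow> x \<in> carrier G \<Longrightarrow> z \<otimes> x = x \<otimes> z" by (simp add: grp_center_def)
lemma cen_one: "\<one> \<in> grp_center G" by (simp add: grp_center_def)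
lemma cen_mult: "z \<in> grp_center G \<Longrightarrow> w \<in> grp_center G \<Longrightarrow> z \<otimes> w \<in> grp_center G"
proof -
  assume z: "z \<in> grp_center G" and w: "w \<in> grp_center G"
  have zc: "z \<in> carrier G" and wc: "w \<in> carrier G" using z w by (auto simp: grp_center_def)
  have "(z \<otimes> w) \<otimes> x = x \<otimes> (z \<otimes> w)" if x: "x \<in> carrier G" for x
  proof -
    have "(z \<otimes> w) \<otimes> x = z \<otimes> (w \<otimes> x)" using zc wc x by (simp add: m_assoc)
    also have "\<dots> = z \<otimes> (x \<otimes> w)" using w x by (simp add: grp_center_def)
    also have "\<dots> = (z \<otimes> x) \<otimes> w" using zc wc x by (simp add: m_assoc)
    also have "\<dots> = (x \<otimes> z) \<otimes> w" using z x by (simp add: grp_center_def)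
    also have "\<dots> = x \<otimes> (z \<otimes> w)" using zc wc x by (simp add: m_assoc)
    finally show ?thesis .
  qed
  then show ?thesis using zc wc by (simp add: grp_center_def)
qed
lemma cen_inv: "z \<in> grp_center G \<Longrightarrow> inv z \<in> grp_center G"
proof -
  assume z: "z \<in> grp_center G"
  have zc: "z \<in> carrier G" using z by (auto simp: grp_center_def)
  have "inv z \<otimes> x = x \<otimes> inv z" if x: "x \<in> carrier G" for x
  proof -
    have "inv z \<otimes> x = inv z \<otimes> (x \<otimes> z) \<otimes> inv z" using zc x by (simp add: m_assoc)
    also have "\<dots> = inv z \<otimes> (z \<otimes> x) \<otimes> inv z" using z x by (simp add: grp_center_def)
    also have "\<dots> = x \<otimes> inv z" using zc x by (simp add: m_assoc[symmetric])
    finally show ?thesis .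
  qed
  then show ?thesis using zc by (simp add: grp_center_def)
qed

lemma cen_sub: "subgroup (grp_center G) G"
  by (rule subgroupI) (auto simp: cen_carrier cen_mult cen_inv intro: cen_one)

lemma cen_normal: "grp_center G \<lhd> G"
  by (rule central_normal[OF is_group cen_sub]) (rule cen_comm)

end

locale c2 = group E for E (structure) +
  assumes c2: "\<And>x y. x \<in> carrier E \<Longrightarrow> y \<in> carrier E \<Longrightarrow> x \<otimes> y \<otimes> inv x \<otimes> inv y \<in> grp_center E"
begin

abbreviation "cen \<equiv> grp_center E"
abbreviation "prd xs \<equiv> foldr (\<otimes>) xs \<one>"

definition mz where "mz a b \<longleftrightarrow> a \<in> carrier E \<and> b \<in> carrier E \<and> (\<exists>c\<in>cen. a = c \<otimes> b)"

lemma mz_refl: "a \<in> carrier E \<Longrightarrow> mz a a"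
  unfolding mz_def using cen_one by force

lemma mz_sym: "mz a b \<Longrightarrow> mz b a"
proof -
  assume "mz a b"
  then obtain c where c: "c \<in> cen" "a = c \<otimes> b" "a \<in> carrier E" "b \<in> carrier E" by (auto simp: mz_def)
  have cc: "c \<in> carrier E" using c cen_carrier by auto
  have "b = inv c \<otimes> a" using c cc by (simp add: m_assoc[symmetric])
  then show ?thesis using c cen_inv unfolding mz_def by blast
qed

lemma mz_trans: "mz a b \<Longrightarrow> mz b c \<Longrightarrow> mz a c"
proof -
  assume "mz a b" "mz b c"
  then obtain d e where d: "d \<in> cen" "a = d \<otimes> b" "e \<in> cen" "b = e \<otimes> c" "a \<in> carrier E" "c \<in> carrier E"
    by (auto simp: mz_def)
  have "a = (d \<otimes> e) \<otimes> c" using d cen_carrier by (simp add: m_assoc)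
  then show ?thesis using d cen_mult unfolding mz_def by blast
qed

lemma mz_mult: "mz a a' \<Longrightarrow> mz b b' \<Longrightarrow> mz (a \<otimes> b) (a' \<otimes> b')"
proof -
  assume "mz a a'" "mz b b'"
  then obtain c d where cd: "c \<in> cen" "d \<in> cen" "a = c \<otimes> a'" "b = d \<otimes> b'"
    "a' \<in> carrier E" "b' \<in> carrier E" by (auto simp: mz_def)
  have cc: "c \<in> carrier E" "d \<in> carrier E" using cd cen_carrier by auto
  have "a \<otimes> b = c \<otimes> (a' \<otimes> d) \<otimes> b'" using cd cc by (simp add: m_assoc)
  also have "\<dots> = c \<otimes> (d \<otimes> a') \<otimes> b'" using cen_comm[of d a'] cd by simp
  also have "\<dots> = (c \<otimes> d) \<otimes> (a' \<otimes> b')" using cd cc by (simp add: m_assoc)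
  finally show ?thesis using cd cc cen_mult unfolding mz_def by blast
qed

lemma mz_cen: "c \<in> cen \<Longrightarrow> b \<in> carrier E \<Longrightarrow> mz (c \<otimes> b) b"
  unfolding mz_def by (auto simp: cen_carrier)

lemma mz_swap: "x \<in> carrier E \<Longrightarrow> y \<in> carrier E \<Longrightarrow> mz (x \<otimes> y) (y \<otimes> x)"
proof -
  assume x: "x \<in> carrier E" and y: "y \<in> carrier E"
  have e1: "inv y \<otimes> (y \<otimes> x) = x" using x y by (simp add: m_assoc[symmetric])
  have "x \<otimes> y = (x \<otimes> y \<otimes> inv x \<otimes> inv y) \<otimes> (y \<otimes> x)"
    using x y e1 by (simp add: m_assoc)
  then show ?thesis using c2[OF x y] x y unfolding mz_def by force
qed

lemma prd_closed: "set xs \<subseteq> carrier E \<Longrightarrow> prd xs \<in> carrier E"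
  by (induction xs) auto

lemma prd_cen: "set xs \<subseteq> cen \<Longrightarrow> prd xs \<in> cen"
  by (induction xs) (auto simp: cen_one cen_mult)

lemma foldr_prd: "set xs \<subseteq> carrier E \<Longrightarrow> b \<in> carrier E \<Longrightarrow> foldr (\<otimes>) xs b = prd xs \<otimes> b"
  by (induction xs) (auto simp: m_assoc prd_closed)

lemma prd_snoc: "set xs \<subseteq> carrier E \<Longrightarrow> a \<in> carrier E \<Longrightarrow> prd (xs @ [a]) = prd xs \<otimes> a"
  using foldr_prd[of xs a] by simp

lemma prd_rot_mz: "set xs \<subseteq> carrier E \<Longrightarrow> a \<in> carrier E \<Longrightarrow> mz (prd (a # xs)) (prd (xs @ [a]))"
  using prd_snoc[of xs a] mz_swap[of a "prd xs"] prd_closed[of xs] by simp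

lemma prd_rot_cen: "set xs \<subseteq> carrier E \<Longrightarrow> a \<in> cen \<Longrightarrow> prd (a # xs) = prd (xs @ [a])"
  using cen_comm[of a "prd xs"] prd_snoc[of xs a] prd_closed[of xs] cen_carrier[of a] by simp

lemma prd_mz: "(\<And>j. j \<in> set js \<Longrightarrow> mz (f j) (g j)) \<Longrightarrow> mz (prd (map f js)) (prd (map g js))"
  by (induction js) (auto simp: mz_refl mz_mult)

lemma prd_pw: "(\<And>j. j \<in> set js \<Longrightarrow> x j \<in> carrier E \<and> y j \<in> carrier E) \<Longrightarrow>
   mz (prd (map (\<lambda>j. x j \<otimes> y j) js)) (prd (map x js) \<otimes> prd (map y js))"
proof (induction js)
  case Nil
  then show ?case by (simp add: mz_refl)
next
  case (Cons a js)
  let ?X = "prd (map x js)" and ?Y = "prd (map y js)"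
  have xa: "x a \<in> carrier E" "y a \<in> carrier E" using Cons.prems by auto
  have XY: "?X \<in> carrier E" "?Y \<in> carrier E" using Cons.prems by (auto intro!: prd_closed)
  have "mz (x a \<otimes> y a \<otimes> prd (map (\<lambda>j. x j \<otimes> y j) js)) (x a \<otimes> y a \<otimes> (?X \<otimes> ?Y))"
    using Cons xa by (intro mz_mult mz_refl) auto
  moreover have "x a \<otimes> y a \<otimes> (?X \<otimes> ?Y) = x a \<otimes> (y a \<otimes> ?X) \<otimes> ?Y"
    using xa XY by (simp add: m_assoc)
  moreover have "mz (x a \<otimes> (y a \<otimes> ?X) \<otimes> ?Y) (x a \<otimes> (?X \<otimes> y a) \<otimes> ?Y)"
    using xa XY by (intro mz_mult mz_refl mz_swap) auto
  moreover have "x a \<otimes> (?X \<otimes> y a) \<otimes> ?Y = (x a \<otimes> ?X) \<otimes> (y a \<otimes> ?Y)"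
    using xa XY by (simp add: m_assoc)
  ultimately show ?case by (simp add: mz_trans)
qed

lemma prd_pw_cen: "(\<And>j. j \<in> set js \<Longrightarrow> z j \<in> cen \<and> w j \<in> carrier E) \<Longrightarrow>
   prd (map (\<lambda>j. z j \<otimes> w j) js) = prd (map z js) \<otimes> prd (map w js)"
proof (induction js)
  case (Cons a js)
  let ?Z = "prd (map z js)" and ?W = "prd (map w js)"
  have za: "z a \<in> cen" "w a \<in> carrier E" using Cons.prems by auto
  have ZW: "?Z \<in> cen" "?W \<in> carrier E"
    using Cons.prems by (auto intro!: prd_cen prd_closed)
  have zc: "z a \<in> carrier E" "?Z \<in> carrier E" using za ZW cen_carrier by auto
  have "prd (map (\<lambda>j. z j \<otimes> w j) (a # js)) = z a \<otimes> w a \<otimes> (?Z \<otimes> ?W)"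
    using Cons by simp
  also have "\<dots> = z a \<otimes> (w a \<otimes> ?Z) \<otimes> ?W" using za ZW zc by (simp add: m_assoc)
  also have "\<dots> = z a \<otimes> (?Z \<otimes> w a) \<otimes> ?W" using cen_comm[of "?Z" "w a"] ZW za by simp
  also have "\<dots> = (z a \<otimes> ?Z) \<otimes> (w a \<otimes> ?W)" using za ZW zc by (simp add: m_assoc)
  finally show ?case by simp
qed simp

lemma prd_one: "prd (map (\<lambda>j. \<one>) js) = \<one>"
  by (induction js) auto

lemma prd_inv_cen: "(\<And>j. j \<in> set js \<Longrightarrow> z j \<in> cen) \<Longrightarrow>
   prd (map (\<lambda>j. inv z j) js) = inv prd (map z js)"
proof -
  assume z: "\<And>j. j \<in> set js \<Longrightarrow> z j \<in> cen"
  have "prd (map (\<lambda>j. inv z j \<otimes> z j) js) = prd (map (\<lambda>j. inv z j) js) \<otimes> prd (map z js)"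
    using z by (intro prd_pw_cen) (auto simp: cen_inv cen_carrier)
  moreover have "prd (map (\<lambda>j. inv z j \<otimes> z j) js) = prd (map (\<lambda>j. \<one>) js)"
    using z by (intro arg_cong[where f=prd] map_cong) (auto simp: cen_carrier)
  ultimately have "prd (map (\<lambda>j. inv z j) js) \<otimes> prd (map z js) = \<one>" by (simp add: prd_one)
  moreover have "prd (map (\<lambda>j. inv z j) js) \<in> carrier E" "prd (map z js) \<in> carrier E"
    using z by (auto intro!: prd_closed simp: cen_carrier)
  ultimately show ?thesis using inv_equality by auto
qed

end

locale c2p = c2 E for E (structure) +
  fixes p :: nat
  assumes p: "p > 0"
begin

lemma N_pos: "p ^ n > 0" using p by simp

lemma En_group: "group (En E p n)"
  unfolding En_def by (rule product_group) (rule is_group)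

lemma En_carrier: "carrier (En E p n) = (\<Pi>\<^sub>E i\<in>{..<p^n}. carrier E)"
  by (simp add: En_def)

lemma En_mult: "x \<otimes>\<^bsub>En E p n\<^esub> y = (\<lambda>i\<in>{..<p^n}. x i \<otimes> y i)"
  by (simp add: En_def)

lemma En_one: "\<one>\<^bsub>En E p n\<^esub> = (\<lambda>i\<in>{..<p^n}. \<one>)"
  by (simp add: En_def)

lemma En_inv: "x \<in> carrier (En E p n) \<Longrightarrow> inv\<^bsub>En E p n\<^esub> x = (\<lambda>i\<in>{..<p^n}. inv x i)"
  unfolding En_def by (rule inv_product_group) (auto simp: is_group)

lemma Zn_eq: "Zn E p n = {x \<in> carrier (En E p n). \<forall>i<p^n. x i \<in> cen}"
proof (rule Set.set_eqI, rule iffI)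
  fix x assume x: "x \<in> Zn E p n"
  then have xc: "x \<in> carrier (En E p n)" and xcom: "\<And>y. y \<in> carrier (En E p n) \<Longrightarrow>
     x \<otimes>\<^bsub>En E p n\<^esub> y = y \<otimes>\<^bsub>En E p n\<^esub> x"
    by (auto simp: Zn_def grp_center_def)
  have "x i \<in> cen" if i: "i < p^n" for i
  proof -
    have "x i \<otimes> e = e \<otimes> x i" if e: "e \<in> carrier E" for e
    proof -
      define y where "y = (\<lambda>j\<in>{..<p^n}. if j = i then e else \<one>)"
      have "y \<in> carrier (En E p n)" using e by (auto simp: y_def En_carrier)
      from xcom[OF this] have "(x \<otimes>\<^bsub>En E p n\<^esub> y) i = (y \<otimes>\<^bsub>En E p n\<^esub> x) i" by simp
      then show ?thesis using i by (simp add: En_mult y_def)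
    qed
    moreover have "x i \<in> carrier E" using xc i by (auto simp: En_carrier)
    ultimately show ?thesis by (simp add: grp_center_def)
  qed
  then show "x \<in> {x \<in> carrier (En E p n). \<forall>i<p^n. x i \<in> cen}" using xc by auto
next
  fix x assume x: "x \<in> {x \<in> carrier (En E p n). \<forall>i<p^n. x i \<in> cen}"
  have "x \<otimes>\<^bsub>En E p n\<^esub> y = y \<otimes>\<^bsub>En E p n\<^esub> x" if y: "y \<in> carrier (En E p n)" for y
    unfolding En_mult
  proof (rule restrict_ext)
    fix i assume "i \<in> {..<p^n}"
    then have "x i \<in> cen" "y i \<in> carrier E" using x y by (auto simp: En_carrier)
    then show "x i \<otimes> y i = y i \<otimes> x i" by (rule cen_comm)
  qed
  then show "x \<in> Zn E p n" using x by (auto simp: Zn_def grp_center_def)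
qed

lemma Zn_sub: "subgroup (Zn E p n) (En E p n)"
  unfolding Zn_def by (rule group.cen_sub[OF En_group])

lemma Zn_normal: "Zn E p n \<lhd> En E p n"
  unfolding Zn_def by (rule group.cen_normal[OF En_group])

lemma Zn_comm: "z \<in> Zn E p n \<Longrightarrow> x \<in> carrier (En E p n) \<Longrightarrow> z \<otimes>\<^bsub>En E p n\<^esub> x = x \<otimes>\<^bsub>En E p n\<^esub> z"
  unfolding Zn_def by (rule group.cen_comm[OF En_group])

lemma Zn_carrier: "Zn E p n \<subseteq> carrier (En E p n)"
  by (auto simp: Zn_eq)

lemma Zcls: assumes a: "a \<in> carrier (En E p n)" and b: "b \<in> carrier (En E p n)"
  shows "(Zn E p n #>\<^bsub>En E p n\<^esub> a = Zn E p n #>\<^bsub>En E p n\<^esub> b) \<longleftrightarrow> (\<forall>i<p^n. mz (a i) (b i))"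
proof
  interpret G: group "En E p n" by (rule En_group)
  assume "Zn E p n #>\<^bsub>En E p n\<^esub> a = Zn E p n #>\<^bsub>En E p n\<^esub> b"
  then have "a \<in> Zn E p n #>\<^bsub>En E p n\<^esub> b" using G.rcos_self[OF a Zn_sub] by simp
  then obtain z where z: "z \<in> Zn E p n" "a = z \<otimes>\<^bsub>En E p n\<^esub> b" unfolding r_coset_def by blast
  show "\<forall>i<p^n. mz (a i) (b i)"
  proof (intro allI impI)
    fix i assume i: "i < p^n"
    have "a i = z i \<otimes> b i" using z(2) i by (simp add: En_mult)
    moreover have "z i \<in> cen" using z(1) i by (simp add: Zn_eq)
    moreover have "a i \<in> carrier E" "b i \<in> carrier E" using a b i by (auto simp: En_carrier)
    ultimately show "mz (a i) (b i)" unfolding mz_def by blast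
  qed
next
  interpret G: group "En E p n" by (rule En_group)
  assume h: "\<forall>i<p^n. mz (a i) (b i)"
  define z where "z = (\<lambda>i\<in>{..<p^n}. a i \<otimes> inv b i)"
  have bc: "\<And>i. i < p^n \<Longrightarrow> b i \<in> carrier E" using b by (auto simp: En_carrier)
  have zc: "z i \<in> cen" if i: "i < p^n" for i
  proof -
    obtain c where c: "c \<in> cen" "a i = c \<otimes> b i" using h i by (auto simp: mz_def)
    have cc: "c \<in> carrier E" using c(1) by (rule cen_carrier)
    have "a i \<otimes> inv b i = c \<otimes> (b i \<otimes> inv b i)" using c(2) cc bc[OF i] by (simp add: m_assoc)
    also have "\<dots> = c" using cc bc[OF i] by simp
    finally show ?thesis using i c(1) by (simp add: z_def)
  qed
  have zZ: "z \<in> Zn E p n"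
  proof -
    have "z \<in> carrier (En E p n)"
    proof -
      have "\<forall>i\<in>{..<p^n}. z i \<in> carrier E" using zc cen_carrier by blast
      moreover have "z \<in> extensional {..<p^n}" unfolding z_def by (rule restrict_extensional)
      ultimately show ?thesis unfolding En_carrier PiE_iff by blast
    qed
    then show ?thesis using zc unfolding Zn_eq by blast
  qed
  have "a = z \<otimes>\<^bsub>En E p n\<^esub> b"
    unfolding En_mult
  proof (rule ext)
    fix i
    show "a i = (\<lambda>i\<in>{..<p^n}. z i \<otimes> b i) i"
    proof (cases "i < p^n")
      case True
      have ac: "a i \<in> carrier E" using a True by (auto simp: En_carrier)
      have zi: "z i = a i \<otimes> inv b i" using True unfolding z_def by simp
      have "z i \<otimes> b i = a i \<otimes> (inv b i \<otimes> b i)" unfolding zi using ac bc[OF True] by (simp add: m_assoc)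
      also have "\<dots> = a i" using ac bc[OF True] by simp
      finally show ?thesis using True by simp
    next
      case False
      then have "a i = undefined" using PiE_arb[OF a[unfolded En_carrier], of i] False by simp
      then show ?thesis using False by simp
    qed
  qed
  then have "a \<in> Zn E p n #>\<^bsub>En E p n\<^esub> b" using G.rcosI[OF zZ Zn_carrier b] by simp
  then show "Zn E p n #>\<^bsub>En E p n\<^esub> a = Zn E p n #>\<^bsub>En E p n\<^esub> b"
    using G.repr_independence[OF _ b Zn_sub] by simp
qed

end

context c2p
begin

lemma map_restrict_upt: "map (\<lambda>i\<in>{..<N}. f i) [0..<N] = map f [0..<N]"
  by (rule map_cong) auto

lemma Zn_coord: "z \<in> Zn E p n \<Longrightarrow> i < p^n \<Longrightarrow> z i \<in> cen"
  by (simp add: Zn_eq)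

lemma En_coord: "x \<in> carrier (En E p n) \<Longrightarrow> i < p^n \<Longrightarrow> x i \<in> carrier E"
  unfolding En_carrier by (simp add: PiE_iff)

lemma Fn_Zn: "Fn E p n \<subseteq> Zn E p n"
  by (auto simp: Fn_def)

lemma Fn_sub: "subgroup (Fn E p n) (En E p n)"
proof -
  interpret G: group "En E p n" by (rule En_group)
  interpret Z: subgroup "Zn E p n" "En E p n" by (rule Zn_sub)
  show ?thesis
  proof (rule G.subgroupI)
    show "Fn E p n \<subseteq> carrier (En E p n)" using Fn_Zn Zn_carrier by blast
  next
    have "prd (map (\<one>\<^bsub>En E p n\<^esub>) [0..<p^n]) = \<one>"
      unfolding En_one map_restrict_upt by (rule prd_one)
    then have "\<one>\<^bsub>En E p n\<^esub> \<in> Fn E p n" using Z.one_closed by (simp add: Fn_def)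
    then show "Fn E p n \<noteq> {}" by blast
  next
    fix a assume a: "a \<in> Fn E p n"
    then have aZ: "a \<in> Zn E p n" and a1: "prd (map a [0..<p^n]) = \<one>" by (auto simp: Fn_def)
    have "prd (map (inv\<^bsub>En E p n\<^esub> a) [0..<p^n]) = prd (map (\<lambda>i. inv (a i)) [0..<p^n])"
      unfolding En_inv[OF Z.mem_carrier[OF aZ]] map_restrict_upt ..
    also have "\<dots> = inv prd (map a [0..<p^n])"
      by (rule prd_inv_cen) (use aZ Zn_coord in auto)
    also have "\<dots> = \<one>" using a1 by simp
    finally show "inv\<^bsub>En E p n\<^esub> a \<in> Fn E p n" using Z.m_inv_closed[OF aZ] by (simp add: Fn_def)
  next
    fix a b assume a: "a \<in> Fn E p n" and b: "b \<in> Fn E p n"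
    then have aZ: "a \<in> Zn E p n" and a1: "prd (map a [0..<p^n]) = \<one>"
      and bZ: "b \<in> Zn E p n" and b1: "prd (map b [0..<p^n]) = \<one>" by (auto simp: Fn_def)
    have "prd (map (a \<otimes>\<^bsub>En E p n\<^esub> b) [0..<p^n]) = prd (map (\<lambda>i. a i \<otimes> b i) [0..<p^n])"
      unfolding En_mult map_restrict_upt ..
    also have "\<dots> = prd (map a [0..<p^n]) \<otimes> prd (map b [0..<p^n])"
      by (rule prd_pw_cen) (use aZ bZ Zn_coord cen_carrier in auto)
    also have "\<dots> = \<one>" using a1 b1 by simp
    finally show "a \<otimes>\<^bsub>En E p n\<^esub> b \<in> Fn E p n" using Z.m_closed[OF aZ bZ] by (simp add: Fn_def)
  qed
qed

lemma Fn_normal: "Fn E p n \<lhd> En E p n"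
  by (rule central_normal[OF En_group Fn_sub]) (use Fn_Zn Zn_comm in blast)

lemma Fn_carrier: "Fn E p n \<subseteq> carrier (En E p n)"
  using Fn_Zn Zn_carrier by blast

lemma mod_idx: "i < p^n \<Longrightarrow> (i + p^n - 1) mod p^n < p^n"
  using N_pos by simp

lemma shift_carrier: "x \<in> carrier (En E p n) \<Longrightarrow> shift p n x \<in> carrier (En E p n)"
  unfolding shift_def En_carrier restrict_PiE_iff
  using N_pos by (simp add: PiE_iff)

lemma shift_mult: "x \<in> carrier (En E p n) \<Longrightarrow> y \<in> carrier (En E p n) \<Longrightarrow>
   shift p n (x \<otimes>\<^bsub>En E p n\<^esub> y) = shift p n x \<otimes>\<^bsub>En E p n\<^esub> shift p n y"
  unfolding shift_def En_mult
  by (rule restrict_ext) (simp add: p)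

lemma shift_pow: "x \<in> carrier (En E p n) \<Longrightarrow>
   (shift p n ^^ k) x = (\<lambda>i\<in>{..<p^n}. x ((i + k * (p^n - 1)) mod p^n))"
proof (induction k)
  case 0
  have "(\<lambda>i\<in>{..<p^n}. x ((i + 0 * (p^n - 1)) mod p^n)) = (\<lambda>i\<in>{..<p^n}. x i)"
    by (rule restrict_ext) simp
  also have "\<dots> = x" using 0 unfolding En_carrier by (rule PiE_restrict)
  finally show ?case by simp
next
  case (Suc k)
  have "(shift p n ^^ Suc k) x = shift p n ((shift p n ^^ k) x)" by simp
  also have "\<dots> = (\<lambda>i\<in>{..<p^n}. x ((i + Suc k * (p^n - 1)) mod p^n))"
    unfolding Suc.IH[OF Suc.prems] shift_def
  proof (rule restrict_ext)
    fix i assume i: "i \<in> {..<p^n}"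
    have "((i + p ^ n - 1) mod p ^ n + k * (p ^ n - 1)) mod p ^ n
        = (i + p ^ n - 1 + k * (p ^ n - 1)) mod p ^ n" by (simp add: mod_add_left_eq)
    also have "i + p ^ n - 1 + k * (p ^ n - 1) = i + Suc k * (p ^ n - 1)"
    proof -
      obtain M where M: "p^n = Suc M" using N_pos[of n] gr0_implies_Suc by blast
      show ?thesis unfolding M by simp
    qed
    finally show "(\<lambda>i\<in>{..<p ^ n}. x ((i + k * (p ^ n - 1)) mod p ^ n)) ((i + p ^ n - 1) mod p ^ n) =
         x ((i + Suc k * (p ^ n - 1)) mod p ^ n)"
      using mod_idx[of i] i by simp
  qed
  finally show ?case .
qed

lemma shift_per: "x \<in> carrier (En E p n) \<Longrightarrow> (shift p n ^^ (p^n)) x = x"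
proof -
  assume x: "x \<in> carrier (En E p n)"
  have "(\<lambda>i\<in>{..<p^n}. x ((i + p^n * (p^n - 1)) mod p^n)) = (\<lambda>i\<in>{..<p^n}. x i)"
    by (rule restrict_ext) simp
  also have "\<dots> = x" using x unfolding En_carrier by (rule PiE_restrict)
  finally show ?thesis using shift_pow[OF x] by simp
qed

lemma shift_pow_carrier: "x \<in> carrier (En E p n) \<Longrightarrow> (shift p n ^^ k) x \<in> carrier (En E p n)"
  by (induction k) (auto simp: shift_carrier)

lemma shift_Zn: "z \<in> Zn E p n \<Longrightarrow> shift p n z \<in> Zn E p n"
proof -
  assume z: "z \<in> Zn E p n"
  have "shift p n z \<in> carrier (En E p n)" using z Zn_carrier shift_carrier by blast
  moreover have "shift p n z i \<in> cen" if "i < p^n" for i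
    using that mod_idx[of i] Zn_coord[OF z] by (simp add: shift_def)
  ultimately show ?thesis by (simp add: Zn_eq)
qed

lemma shift_list: "map (shift p n x) [0..<p^n] = x (p^n - 1) # map x [0..<p^n - 1]"
proof -
  have N: "p^n = Suc (p^n - 1)" using N_pos[of n] by simp
  have "[0..<p^n] = 0 # map Suc [0..<p^n - 1]"
    by (subst N) (simp add: upt_conv_Cons map_Suc_upt del: upt_Suc)
  moreover have "shift p n x 0 = x (p^n - 1)" using N_pos[of n] by (simp add: shift_def)
  moreover have "shift p n x (Suc j) = x j" if "j < p^n - 1" for j
  proof -
    have "(Suc j + p ^ n - 1) mod p ^ n = j" using that N_pos[of n]
      by (metis Nat.add_diff_assoc N add_Suc_shift diff_Suc_1 le_add1 less_Suc_eq mod_add_self2 mod_less plus_1_eq_Suc)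
    moreover have "Suc j < p^n" using that by simp
    ultimately show ?thesis using that by (simp add: shift_def)
  qed
  ultimately show ?thesis by simp
qed

lemma upt_snoc_N: "map x [0..<p^n] = map x [0..<p^n - 1] @ [x (p^n - 1)]"
proof -
  have N: "p^n = Suc (p^n - 1)" using N_pos[of n] by simp
  show ?thesis by (subst N) simp
qed

lemma shift_Fn: "f \<in> Fn E p n \<Longrightarrow> shift p n f \<in> Fn E p n"
proof -
  assume f: "f \<in> Fn E p n"
  then have fZ: "f \<in> Zn E p n" and f1: "prd (map f [0..<p^n]) = \<one>" by (auto simp: Fn_def)
  have "prd (map (shift p n f) [0..<p^n]) = prd (f (p^n - 1) # map f [0..<p^n - 1])"
    by (simp only: shift_list)
  also have "\<dots> = prd (map f [0..<p^n - 1] @ [f (p^n - 1)])"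
    by (rule prd_rot_cen) (use fZ Zn_coord cen_carrier N_pos[of n] in auto)
  also have "\<dots> = \<one>" using f1 upt_snoc_N[of f] by simp
  finally show ?thesis using shift_Zn[OF fZ] by (simp add: Fn_def)
qed

lemma shift_pow_Fn: "f \<in> Fn E p n \<Longrightarrow> (shift p n ^^ k) f \<in> Fn E p n"
  by (induction k) (auto simp: shift_Fn)

lemma shift_img_Fn: "shift p n ` Fn E p n = Fn E p n"
proof
  show "shift p n ` Fn E p n \<subseteq> Fn E p n" using shift_Fn by blast
next
  show "Fn E p n \<subseteq> shift p n ` Fn E p n"
  proof
    fix f assume f: "f \<in> Fn E p n"
    have fc: "f \<in> carrier (En E p n)" using f Fn_carrier by blast
    have "shift p n ((shift p n ^^ (p^n - 1)) f) = (shift p n ^^ (Suc (p^n - 1))) f" by simp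
    also have "Suc (p^n - 1) = p^n" using N_pos[of n] by simp
    finally have "shift p n ((shift p n ^^ (p^n - 1)) f) = f" using shift_per[OF fc] by simp
    then show "f \<in> shift p n ` Fn E p n" using shift_pow_Fn[OF f] by (metis image_eqI)
  qed
qed

lemma rcoset_img: "Fn E p n #>\<^bsub>En E p n\<^esub> x = (\<lambda>h. h \<otimes>\<^bsub>En E p n\<^esub> x) ` Fn E p n"
  by (auto simp: r_coset_def)

lemma shift_coset: "x \<in> carrier (En E p n) \<Longrightarrow>
  shift p n ` (Fn E p n #>\<^bsub>En E p n\<^esub> x) = Fn E p n #>\<^bsub>En E p n\<^esub> shift p n x"
proof -
  assume x: "x \<in> carrier (En E p n)"
  have "shift p n ` (Fn E p n #>\<^bsub>En E p n\<^esub> x) = (\<lambda>h. shift p n (h \<otimes>\<^bsub>En E p n\<^esub> x)) ` Fn E p n"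
    unfolding rcoset_img by (simp add: image_image)
  also have "\<dots> = (\<lambda>h. shift p n h \<otimes>\<^bsub>En E p n\<^esub> shift p n x) ` Fn E p n"
    by (rule image_cong[OF refl]) (meson Fn_carrier subsetD shift_mult x)
  also have "\<dots> = (\<lambda>h. h \<otimes>\<^bsub>En E p n\<^esub> shift p n x) ` (shift p n ` Fn E p n)"
    by (simp add: image_image)
  also have "\<dots> = Fn E p n #>\<^bsub>En E p n\<^esub> shift p n x"
    unfolding shift_img_Fn rcoset_img ..
  finally show ?thesis .
qed

end

context c2p
begin

lemma Kn_group: "group (Kn E p n)"
  unfolding Kn_def by (rule normal.factorgroup_is_group[OF Fn_normal])

lemma Kn_carrier: "carrier (Kn E p n) = rcosets\<^bsub>En E p n\<^esub> (Fn E p n)"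
  by (simp add: Kn_def FactGroup_def)

lemma Kn_carrier_ex: "B \<in> carrier (Kn E p n) \<Longrightarrow> \<exists>x\<in>carrier (En E p n). B = Fn E p n #>\<^bsub>En E p n\<^esub> x"
  by (auto simp: Kn_carrier RCOSETS_def)

lemma Kn_coset: "x \<in> carrier (En E p n) \<Longrightarrow> Fn E p n #>\<^bsub>En E p n\<^esub> x \<in> carrier (Kn E p n)"
  unfolding Kn_carrier by (rule group.rcosetsI[OF En_group Fn_carrier])

lemma Kn_mult: "x \<in> carrier (En E p n) \<Longrightarrow> y \<in> carrier (En E p n) \<Longrightarrow>
  (Fn E p n #>\<^bsub>En E p n\<^esub> x) \<otimes>\<^bsub>Kn E p n\<^esub> (Fn E p n #>\<^bsub>En E p n\<^esub> y) = Fn E p n #>\<^bsub>En E p n\<^esub> (x \<otimes>\<^bsub>En E p n\<^esub> y)"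
  unfolding Kn_def by (simp add: normal.rcos_sum[OF Fn_normal])

lemma Kn_one: "\<one>\<^bsub>Kn E p n\<^esub> = Fn E p n"
  by (simp add: Kn_def)

lemma sig_pow: "((\<lambda>B. shift p n ` B) ^^ k) B = (shift p n ^^ k) ` B"
  by (induction k) (auto simp: image_comp)

lemma sig_coset_pow: "x \<in> carrier (En E p n) \<Longrightarrow>
   ((\<lambda>B. shift p n ` B) ^^ k) (Fn E p n #>\<^bsub>En E p n\<^esub> x) = Fn E p n #>\<^bsub>En E p n\<^esub> (shift p n ^^ k) x"
proof (induction k)
  case (Suc k)
  then show ?case using shift_coset[OF shift_pow_carrier[OF Suc.prems, of k]] by simp
qed simp

lemma sdc_inst: "sdc (Kn E p n) (\<lambda>B. shift p n ` B) (p^n)"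
proof (rule sdc.intro)
  show "group (Kn E p n)" by (rule Kn_group)
  show "0 < p^n" by (rule N_pos)
next
  fix a assume "a \<in> carrier (Kn E p n)"
  then obtain x where x: "x \<in> carrier (En E p n)" "a = Fn E p n #>\<^bsub>En E p n\<^esub> x"
    using Kn_carrier_ex by blast
  show "shift p n ` a \<in> carrier (Kn E p n)"
    unfolding x(2) shift_coset[OF x(1)] by (rule Kn_coset[OF shift_carrier[OF x(1)]])
  show "((\<lambda>B. shift p n ` B) ^^ p ^ n) a = a"
    unfolding x(2) sig_coset_pow[OF x(1)] shift_per[OF x(1)] ..
next
  fix a b assume "a \<in> carrier (Kn E p n)" "b \<in> carrier (Kn E p n)"
  then obtain x y where x: "x \<in> carrier (En E p n)" "a = Fn E p n #>\<^bsub>En E p n\<^esub> x"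
    and y: "y \<in> carrier (En E p n)" "b = Fn E p n #>\<^bsub>En E p n\<^esub> y"
    using Kn_carrier_ex by metis
  have xy: "x \<otimes>\<^bsub>En E p n\<^esub> y \<in> carrier (En E p n)" using x y group.subgroup_self[OF En_group]
    by (simp add: group.is_monoid[OF En_group] monoid.m_closed)
  show "shift p n ` (a \<otimes>\<^bsub>Kn E p n\<^esub> b) = shift p n ` a \<otimes>\<^bsub>Kn E p n\<^esub> shift p n ` b"
    unfolding x(2) y(2) Kn_mult[OF x(1) y(1)] shift_coset[OF xy] shift_coset[OF x(1)] shift_coset[OF y(1)]
      Kn_mult[OF shift_carrier[OF x(1)] shift_carrier[OF y(1)]] shift_mult[OF x(1) y(1)] ..
qed

lemma Jn_group: "group (Jn E p n)"
  unfolding Jn_def by (rule sdc.grp[OF sdc_inst])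

lemma Jn_carrier: "carrier (Jn E p n) = carrier (Kn E p n) \<times> {..<p^n}"
  by (simp add: Jn_def semidirect_carrier)

lemma Jn_mult: "x \<in> carrier (En E p n) \<Longrightarrow> y \<in> carrier (En E p n) \<Longrightarrow>
  (Fn E p n #>\<^bsub>En E p n\<^esub> x, i) \<otimes>\<^bsub>Jn E p n\<^esub> (Fn E p n #>\<^bsub>En E p n\<^esub> y, j)
   = (Fn E p n #>\<^bsub>En E p n\<^esub> (x \<otimes>\<^bsub>En E p n\<^esub> (shift p n ^^ i) y), (i + j) mod p^n)"
  unfolding Jn_def semidirect_mult sig_coset_pow
  by (simp add: Kn_mult shift_pow_carrier)

definition Sn where "Sn n = (\<lambda>z. Fn E p n #>\<^bsub>En E p n\<^esub> z) ` Zn E p n"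

lemma Ln_eq: "Ln E p n = (\<lambda>s. (s, 0::nat)) ` Sn n"
  unfolding Ln_def Sn_def inK_def by (simp add: image_image)

lemma Sn_sub: "subgroup (Sn n) (Kn E p n)"
proof -
  interpret K: group "Kn E p n" by (rule Kn_group)
  interpret G: group "En E p n" by (rule En_group)
  interpret Z: subgroup "Zn E p n" "En E p n" by (rule Zn_sub)
  show ?thesis
  proof (rule K.subgroupI)
    show "Sn n \<subseteq> carrier (Kn E p n)" unfolding Sn_def using Kn_coset Z.mem_carrier by blast
    show "Sn n \<noteq> {}" unfolding Sn_def using Z.one_closed by blast
  next
    fix a assume "a \<in> Sn n"
    then obtain z where z: "z \<in> Zn E p n" "a = Fn E p n #>\<^bsub>En E p n\<^esub> z" unfolding Sn_def by blast
    have zc: "z \<in> carrier (En E p n)" using z Z.mem_carrier by blast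
    have "(Fn E p n #>\<^bsub>En E p n\<^esub> inv\<^bsub>En E p n\<^esub> z) \<otimes>\<^bsub>Kn E p n\<^esub> a = \<one>\<^bsub>Kn E p n\<^esub>"
      unfolding z(2) Kn_mult[OF G.inv_closed[OF zc] zc] Kn_one
      using zc G.coset_mult_one[OF Fn_carrier] by simp
    then have "inv\<^bsub>Kn E p n\<^esub> a = Fn E p n #>\<^bsub>En E p n\<^esub> inv\<^bsub>En E p n\<^esub> z"
      by (intro K.inv_equality) (use z zc Kn_coset G.inv_closed in auto)
    then show "inv\<^bsub>Kn E p n\<^esub> a \<in> Sn n" unfolding Sn_def using Z.m_inv_closed[OF z(1)] by blast
  next
    fix a b assume "a \<in> Sn n" "b \<in> Sn n"
    then obtain z w where z: "z \<in> Zn E p n" "a = Fn E p n #>\<^bsub>En E p n\<^esub> z"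
      and w: "w \<in> Zn E p n" "b = Fn E p n #>\<^bsub>En E p n\<^esub> w" unfolding Sn_def by blast
    show "a \<otimes>\<^bsub>Kn E p n\<^esub> b \<in> Sn n"
      unfolding z(2) w(2) Kn_mult[OF Z.mem_carrier[OF z(1)] Z.mem_carrier[OF w(1)]] Sn_def
      using Z.m_closed[OF z(1) w(1)] by blast
  qed
qed

lemma Ln_normal: "Ln E p n \<lhd> Jn E p n"
  unfolding Ln_eq Jn_def
proof (rule sdc.nrm[OF sdc_inst Sn_sub])
  fix s a assume s: "s \<in> Sn n" and a: "a \<in> carrier (Kn E p n)"
  obtain z where z: "z \<in> Zn E p n" "s = Fn E p n #>\<^bsub>En E p n\<^esub> z" using s unfolding Sn_def by blast
  obtain x where x: "x \<in> carrier (En E p n)" "a = Fn E p n #>\<^bsub>En E p n\<^esub> x" using a Kn_carrier_ex by blast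
  have zc: "z \<in> carrier (En E p n)" using z Zn_carrier by blast
  show "s \<otimes>\<^bsub>Kn E p n\<^esub> a = a \<otimes>\<^bsub>Kn E p n\<^esub> s"
    unfolding z(2) x(2) Kn_mult[OF zc x(1)] Kn_mult[OF x(1) zc] Zn_comm[OF z(1) x(1)] ..
next
  fix s assume s: "s \<in> Sn n"
  obtain z where z: "z \<in> Zn E p n" "s = Fn E p n #>\<^bsub>En E p n\<^esub> z" using s unfolding Sn_def by blast
  have zc: "z \<in> carrier (En E p n)" using z Zn_carrier by blast
  show "shift p n ` s \<in> Sn n"
    unfolding z(2) shift_coset[OF zc] Sn_def using shift_Zn[OF z(1)] by blast
qed

end

lemma A1: "0 < (i::nat) \<Longrightarrow> i < (M::nat) \<Longrightarrow> (j::nat) < (p::nat) \<Longrightarrow> (i + j*M + p*M - 1) mod (p*M) = i - 1 + j*M"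
proof -
  assume a: "0 < i" "i < M" "j < p"
  have e: "i + j*M + p*M - 1 = (i - 1 + j*M) + p*M" using a(1) by (cases i) auto
  have "Suc j * M \<le> p * M" using a by (intro mult_le_mono1) simp
  then have "i - 1 + j*M < p*M" using a by simp
  then show ?thesis unfolding e by simp
qed

lemma A2: "(j::nat) < (p::nat) - 1 \<Longrightarrow> 0 < (M::nat) \<Longrightarrow> (Suc j * M + p*M - 1) mod (p*M) = M - 1 + j*M"
proof -
  assume a: "j < p - 1" "0 < M"
  have e: "Suc j * M + p*M - 1 = (M - 1 + j*M) + p*M" using a(2) by (cases M) auto
  have "Suc j * M \<le> p * M" using a by (intro mult_le_mono1) simp
  then have "M - 1 + j*M < p*M" using a by simp
  then show ?thesis unfolding e by simp
qed

lemma A5: "0 < (p::nat) \<Longrightarrow> 0 < (M::nat) \<Longrightarrow> M - 1 + (p - 1) * M = p*M - 1"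
  by (cases p; cases M) auto

lemma idx_lt: "(i::nat) < (M::nat) \<Longrightarrow> (j::nat) < (p::nat) \<Longrightarrow> i + j*M < p*M"
proof -
  assume a: "i < M" "j < p"
  have "Suc j * M \<le> p * M" using a by (intro mult_le_mono1) simp
  then show ?thesis using a by simp
qed

context c2p
begin

lemma phi_eq: "phi E p (Suc k) x = (\<lambda>i\<in>{..<p^k}. prd (map (\<lambda>j. x (i + j * p^k)) [0..<p]))"
  by (simp add: phi_def)

lemma idx: "i < p^k \<Longrightarrow> j < p \<Longrightarrow> i + j * p^k < p^(Suc k)"
  using idx_lt[of i "p^k" j p] by (simp add: mult.commute)

lemma phi_coord: "i < p^k \<Longrightarrow> phi E p (Suc k) x i = prd (map (\<lambda>j. x (i + j * p^k)) [0..<p])"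
  by (simp add: phi_eq)

lemma phi_carrier: "x \<in> carrier (En E p (Suc k)) \<Longrightarrow> phi E p (Suc k) x \<in> carrier (En E p k)"
  unfolding phi_eq En_carrier restrict_PiE_iff
proof
  fix i assume x: "x \<in> (\<Pi>\<^sub>E i\<in>{..<p ^ Suc k}. carrier E)" and i: "i \<in> {..<p^k}"
  show "prd (map (\<lambda>j. x (i + j * p ^ k)) [0..<p]) \<in> carrier E"
    by (rule prd_closed) (use x i idx in \<open>auto simp: PiE_iff\<close>)
qed

lemma phi_Zn: "z \<in> Zn E p (Suc k) \<Longrightarrow> phi E p (Suc k) z \<in> Zn E p k"
proof -
  assume z: "z \<in> Zn E p (Suc k)"
  have "phi E p (Suc k) z \<in> carrier (En E p k)" using z Zn_carrier phi_carrier by blast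
  moreover have "phi E p (Suc k) z i \<in> cen" if i: "i < p^k" for i
    unfolding phi_coord[OF i] by (rule prd_cen) (use z i idx Zn_coord in auto)
  ultimately show ?thesis by (simp add: Zn_eq)
qed

lemma phi_mult: "x \<in> carrier (En E p (Suc k)) \<Longrightarrow> y \<in> carrier (En E p (Suc k)) \<Longrightarrow>
  Zn E p k #>\<^bsub>En E p k\<^esub> phi E p (Suc k) (x \<otimes>\<^bsub>En E p (Suc k)\<^esub> y)
   = Zn E p k #>\<^bsub>En E p k\<^esub> (phi E p (Suc k) x \<otimes>\<^bsub>En E p k\<^esub> phi E p (Suc k) y)"
proof -
  interpret G: group "En E p (Suc k)" by (rule En_group)
  interpret G': group "En E p k" by (rule En_group)
  assume x: "x \<in> carrier (En E p (Suc k))" and y: "y \<in> carrier (En E p (Suc k))"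
  have c1: "phi E p (Suc k) (x \<otimes>\<^bsub>En E p (Suc k)\<^esub> y) \<in> carrier (En E p k)"
    using x y by (intro phi_carrier) simp
  have c2: "phi E p (Suc k) x \<otimes>\<^bsub>En E p k\<^esub> phi E p (Suc k) y \<in> carrier (En E p k)"
    using x y phi_carrier by simp
  show ?thesis unfolding Zcls[OF c1 c2]
  proof (intro allI impI)
    fix i assume i: "i < p^k"
    have "phi E p (Suc k) (x \<otimes>\<^bsub>En E p (Suc k)\<^esub> y) i = prd (map (\<lambda>j. x (i + j * p^k) \<otimes> y (i + j * p^k)) [0..<p])"
      unfolding phi_coord[OF i] En_mult using i idx by (intro arg_cong[where f=prd] map_cong) auto
    moreover have "(phi E p (Suc k) x \<otimes>\<^bsub>En E p k\<^esub> phi E p (Suc k) y) i =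
       prd (map (\<lambda>j. x (i + j * p^k)) [0..<p]) \<otimes> prd (map (\<lambda>j. y (i + j * p^k)) [0..<p])"
      unfolding En_mult using i by (simp add: phi_coord)
    moreover have "mz (prd (map (\<lambda>j. x (i + j * p^k) \<otimes> y (i + j * p^k)) [0..<p]))
       (prd (map (\<lambda>j. x (i + j * p^k)) [0..<p]) \<otimes> prd (map (\<lambda>j. y (i + j * p^k)) [0..<p]))"
      by (rule prd_pw) (use x y i idx En_coord in auto)
    ultimately show "mz (phi E p (Suc k) (x \<otimes>\<^bsub>En E p (Suc k)\<^esub> y) i)
         ((phi E p (Suc k) x \<otimes>\<^bsub>En E p k\<^esub> phi E p (Suc k) y) i)" by simp
  qed
qed

lemma phi_shift: "y \<in> carrier (En E p (Suc k)) \<Longrightarrow>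
  Zn E p k #>\<^bsub>En E p k\<^esub> phi E p (Suc k) (shift p (Suc k) y)
   = Zn E p k #>\<^bsub>En E p k\<^esub> shift p k (phi E p (Suc k) y)"
proof -
  assume y: "y \<in> carrier (En E p (Suc k))"
  define M where "M = p^k"
  have M0: "0 < M" using N_pos M_def by simp
  have N: "p^(Suc k) = p * M" by (simp add: M_def)
  have c1: "phi E p (Suc k) (shift p (Suc k) y) \<in> carrier (En E p k)"
    using y by (intro phi_carrier shift_carrier)
  have c2: "shift p k (phi E p (Suc k) y) \<in> carrier (En E p k)"
    using y by (intro phi_carrier shift_carrier)
  have yc: "\<And>r. r < p * M \<Longrightarrow> y r \<in> carrier E" using y En_coord N by metis
  show ?thesis unfolding Zcls[OF c1 c2]
  proof (intro allI impI)
    fix i assume i: "i < p^k"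
    then have iM: "i < M" by (simp add: M_def)
    have L: "phi E p (Suc k) (shift p (Suc k) y) i = prd (map (\<lambda>j. y ((i + j * M + p * M - 1) mod (p * M))) [0..<p])"
      unfolding phi_coord[OF i] using i idx
      by (intro arg_cong[where f=prd] map_cong) (auto simp: shift_def M_def)
    have R: "shift p k (phi E p (Suc k) y) i = prd (map (\<lambda>j. y ((i + M - 1) mod M + j * M)) [0..<p])"
    proof -
      have "(i + M - 1) mod M < p^k" using M0 by (simp add: M_def)
      then show ?thesis using i by (simp add: shift_def phi_coord M_def)
    qed
    show "mz (phi E p (Suc k) (shift p (Suc k) y) i) (shift p k (phi E p (Suc k) y) i)"
    proof (cases "i = 0")
      case False
      have "(i + M - 1) mod M = i - 1" using False iM
        by (metis Nat.add_diff_assoc2 One_nat_def Suc_leI add_diff_cancel_left' bot_nat_0.not_eq_extremum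
            diff_less less_imp_diff_less mod_add_self2 mod_less zero_less_one)
      then have "shift p k (phi E p (Suc k) y) i = phi E p (Suc k) (shift p (Suc k) y) i"
        unfolding L R using A1[of i M] False iM by (intro arg_cong[where f=prd] map_cong) auto
      then show ?thesis using c1 i by (simp add: mz_refl En_coord)
    next
      case True
      have p1: "p = Suc (p - 1)" using p by simp
      have "[0..<p] = 0 # map Suc [0..<p - 1]"
        by (subst p1) (simp add: upt_conv_Cons map_Suc_upt del: upt_Suc)
      then have "map (\<lambda>j. y ((i + j * M + p * M - 1) mod (p * M))) [0..<p]
          = y ((p * M - 1) mod (p * M)) # map (\<lambda>j. y ((Suc j * M + p * M - 1) mod (p * M))) [0..<p - 1]"
        using True by simp
      also have "\<dots> = y (p * M - 1) # map (\<lambda>j. y (M - 1 + j * M)) [0..<p - 1]"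
      proof -
        have "(p * M - 1) mod (p * M) = p * M - 1" using M0 p by simp
        moreover have "map (\<lambda>j. y ((Suc j * M + p * M - 1) mod (p * M))) [0..<p - 1]
            = map (\<lambda>j. y (M - 1 + j * M)) [0..<p - 1]"
          using A2 M0 by (intro map_cong) auto
        ultimately show ?thesis by simp
      qed
      finally have LL: "map (\<lambda>j. y ((i + j * M + p * M - 1) mod (p * M))) [0..<p]
          = y (p * M - 1) # map (\<lambda>j. y (M - 1 + j * M)) [0..<p - 1]" .
      have "map (\<lambda>j. y ((i + M - 1) mod M + j * M)) [0..<p] = map (\<lambda>j. y (M - 1 + j * M)) [0..<p]"
        using True M0 by simp
      also have "\<dots> = map (\<lambda>j. y (M - 1 + j * M)) [0..<p - 1] @ [y (M - 1 + (p - 1) * M)]"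
        by (subst p1) simp
      also have "M - 1 + (p - 1) * M = p * M - 1" using A5 p M0 by blast
      finally have RR: "map (\<lambda>j. y ((i + M - 1) mod M + j * M)) [0..<p]
          = map (\<lambda>j. y (M - 1 + j * M)) [0..<p - 1] @ [y (p * M - 1)]" .
      have "mz (prd (y (p * M - 1) # map (\<lambda>j. y (M - 1 + j * M)) [0..<p - 1]))
                (prd (map (\<lambda>j. y (M - 1 + j * M)) [0..<p - 1] @ [y (p * M - 1)]))"
      proof (rule prd_rot_mz)
        show "set (map (\<lambda>j. y (M - 1 + j * M)) [0..<p - 1]) \<subseteq> carrier E"
        proof
          fix u assume "u \<in> set (map (\<lambda>j. y (M - 1 + j * M)) [0..<p - 1])"
          then obtain j where j: "j < p - 1" "u = y (M - 1 + j * M)" by auto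
          have "M - 1 + j * M < p * M" using idx_lt[of "M - 1" M j p] j M0 by simp
          then show "u \<in> carrier E" using yc j by simp
        qed
        show "y (p * M - 1) \<in> carrier E" using yc M0 p by simp
      qed
      then show ?thesis unfolding L R LL RR .
    qed
  qed
qed

end

context c2p
begin

definition repF where "repF n C = (SOME x. x \<in> carrier (En E p n) \<and> C = Fn E p n #>\<^bsub>En E p n\<^esub> x)"

lemma repF: "x \<in> carrier (En E p n) \<Longrightarrow>
  repF n (Fn E p n #>\<^bsub>En E p n\<^esub> x) \<in> carrier (En E p n) \<and>
  Fn E p n #>\<^bsub>En E p n\<^esub> x = Fn E p n #>\<^bsub>En E p n\<^esub> repF n (Fn E p n #>\<^bsub>En E p n\<^esub> x)"
  unfolding repF_def by (rule someI[of _ x]) auto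

lemma repF_mem: "x \<in> carrier (En E p n) \<Longrightarrow> repF n (Fn E p n #>\<^bsub>En E p n\<^esub> x) \<in> Fn E p n #>\<^bsub>En E p n\<^esub> x"
proof -
  assume x: "x \<in> carrier (En E p n)"
  have "repF n (Fn E p n #>\<^bsub>En E p n\<^esub> x) \<in> Fn E p n #>\<^bsub>En E p n\<^esub> repF n (Fn E p n #>\<^bsub>En E p n\<^esub> x)"
    using repF[OF x] by (intro group.rcos_self[OF En_group _ Fn_sub]) blast
  then show ?thesis using repF[OF x] by simp
qed

lemma zcls_central: "z \<in> Zn E p (Suc k) \<Longrightarrow> x \<in> carrier (En E p (Suc k)) \<Longrightarrow>
  Zn E p k #>\<^bsub>En E p k\<^esub> phi E p (Suc k) (z \<otimes>\<^bsub>En E p (Suc k)\<^esub> x) = Zn E p k #>\<^bsub>En E p k\<^esub> phi E p (Suc k) x"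
proof -
  interpret G': group "En E p k" by (rule En_group)
  assume z: "z \<in> Zn E p (Suc k)" and x: "x \<in> carrier (En E p (Suc k))"
  have zc: "z \<in> carrier (En E p (Suc k))" using z Zn_carrier by blast
  have pz: "phi E p (Suc k) z \<in> Zn E p k" using phi_Zn[OF z] .
  have pzc: "phi E p (Suc k) z \<in> carrier (En E p k)" using pz Zn_carrier by blast
  have "Zn E p k #>\<^bsub>En E p k\<^esub> phi E p (Suc k) (z \<otimes>\<^bsub>En E p (Suc k)\<^esub> x)
     = Zn E p k #>\<^bsub>En E p k\<^esub> (phi E p (Suc k) z \<otimes>\<^bsub>En E p k\<^esub> phi E p (Suc k) x)"
    by (rule phi_mult[OF zc x])
  also have "\<dots> = (Zn E p k #>\<^bsub>En E p k\<^esub> phi E p (Suc k) z) #>\<^bsub>En E p k\<^esub> phi E p (Suc k) x"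
    using G'.coset_mult_assoc[OF Zn_carrier pzc phi_carrier[OF x]] by simp
  also have "\<dots> = Zn E p k #>\<^bsub>En E p k\<^esub> phi E p (Suc k) x"
    using G'.coset_join2[OF pzc Zn_sub pz] by simp
  finally show ?thesis .
qed

lemma rep_Z: "x \<in> carrier (En E p (Suc k)) \<Longrightarrow>
  Zn E p k #>\<^bsub>En E p k\<^esub> phi E p (Suc k) (repF (Suc k) (Fn E p (Suc k) #>\<^bsub>En E p (Suc k)\<^esub> x))
   = Zn E p k #>\<^bsub>En E p k\<^esub> phi E p (Suc k) x"
proof -
  assume x: "x \<in> carrier (En E p (Suc k))"
  obtain f where f: "f \<in> Fn E p (Suc k)" "repF (Suc k) (Fn E p (Suc k) #>\<^bsub>En E p (Suc k)\<^esub> x) = f \<otimes>\<^bsub>En E p (Suc k)\<^esub> x"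
    using repF_mem[OF x] unfolding r_coset_def by blast
  show ?thesis unfolding f(2) using zcls_central[OF _ x] f(1) Fn_Zn by blast
qed

lemma Zcls_mult: "a \<in> carrier (En E p n) \<Longrightarrow> a' \<in> carrier (En E p n) \<Longrightarrow>
  b \<in> carrier (En E p n) \<Longrightarrow> b' \<in> carrier (En E p n) \<Longrightarrow>
  Zn E p n #>\<^bsub>En E p n\<^esub> a = Zn E p n #>\<^bsub>En E p n\<^esub> a' \<Longrightarrow>
  Zn E p n #>\<^bsub>En E p n\<^esub> b = Zn E p n #>\<^bsub>En E p n\<^esub> b' \<Longrightarrow>
  Zn E p n #>\<^bsub>En E p n\<^esub> (a \<otimes>\<^bsub>En E p n\<^esub> b) = Zn E p n #>\<^bsub>En E p n\<^esub> (a' \<otimes>\<^bsub>En E p n\<^esub> b')"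
proof -
  assume as: "a \<in> carrier (En E p n)" "a' \<in> carrier (En E p n)" "b \<in> carrier (En E p n)" "b' \<in> carrier (En E p n)"
    "Zn E p n #>\<^bsub>En E p n\<^esub> a = Zn E p n #>\<^bsub>En E p n\<^esub> a'"
    "Zn E p n #>\<^bsub>En E p n\<^esub> b = Zn E p n #>\<^bsub>En E p n\<^esub> b'"
  have "Zn E p n #>\<^bsub>En E p n\<^esub> (a \<otimes>\<^bsub>En E p n\<^esub> b) = (Zn E p n #>\<^bsub>En E p n\<^esub> a) <#>\<^bsub>En E p n\<^esub> (Zn E p n #>\<^bsub>En E p n\<^esub> b)"
    using normal.rcos_sum[OF Zn_normal as(1,3)] by simp
  also have "\<dots> = (Zn E p n #>\<^bsub>En E p n\<^esub> a') <#>\<^bsub>En E p n\<^esub> (Zn E p n #>\<^bsub>En E p n\<^esub> b')"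
    using as(5,6) by simp
  also have "\<dots> = Zn E p n #>\<^bsub>En E p n\<^esub> (a' \<otimes>\<^bsub>En E p n\<^esub> b')"
    using normal.rcos_sum[OF Zn_normal as(2,4)] by simp
  finally show ?thesis .
qed

lemma shift_cls: "a \<in> carrier (En E p n) \<Longrightarrow> b \<in> carrier (En E p n) \<Longrightarrow>
  Zn E p n #>\<^bsub>En E p n\<^esub> a = Zn E p n #>\<^bsub>En E p n\<^esub> b \<Longrightarrow>
  Zn E p n #>\<^bsub>En E p n\<^esub> shift p n a = Zn E p n #>\<^bsub>En E p n\<^esub> shift p n b"
proof -
  assume a: "a \<in> carrier (En E p n)" and b: "b \<in> carrier (En E p n)"
    and h: "Zn E p n #>\<^bsub>En E p n\<^esub> a = Zn E p n #>\<^bsub>En E p n\<^esub> b"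
  have h': "\<forall>i<p^n. mz (a i) (b i)" using h Zcls[OF a b] by blast
  show ?thesis unfolding Zcls[OF shift_carrier[OF a] shift_carrier[OF b]]
  proof (intro allI impI)
    fix i assume i: "i < p^n"
    show "mz (shift p n a i) (shift p n b i)"
      using h' mod_idx[OF i] i by (simp add: shift_def)
  qed
qed

lemma shift_pow_cls: "a \<in> carrier (En E p n) \<Longrightarrow> b \<in> carrier (En E p n) \<Longrightarrow>
  Zn E p n #>\<^bsub>En E p n\<^esub> a = Zn E p n #>\<^bsub>En E p n\<^esub> b \<Longrightarrow>
  Zn E p n #>\<^bsub>En E p n\<^esub> (shift p n ^^ i) a = Zn E p n #>\<^bsub>En E p n\<^esub> (shift p n ^^ i) b"
proof (induction i)
  case (Suc i)
  have "Zn E p n #>\<^bsub>En E p n\<^esub> shift p n ((shift p n ^^ i) a) = Zn E p n #>\<^bsub>En E p n\<^esub> shift p n ((shift p n ^^ i) b)"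
    by (rule shift_cls[OF shift_pow_carrier[OF Suc.prems(1)] shift_pow_carrier[OF Suc.prems(2)] Suc.IH[OF Suc.prems]])
  then show ?case by simp
qed simp

lemma phi_shift_pow: "y \<in> carrier (En E p (Suc k)) \<Longrightarrow>
  Zn E p k #>\<^bsub>En E p k\<^esub> phi E p (Suc k) ((shift p (Suc k) ^^ i) y)
   = Zn E p k #>\<^bsub>En E p k\<^esub> (shift p k ^^ i) (phi E p (Suc k) y)"
proof (induction i)
  case (Suc i)
  have "Zn E p k #>\<^bsub>En E p k\<^esub> phi E p (Suc k) ((shift p (Suc k) ^^ Suc i) y)
     = Zn E p k #>\<^bsub>En E p k\<^esub> shift p k (phi E p (Suc k) ((shift p (Suc k) ^^ i) y))"
    using phi_shift[OF shift_pow_carrier[OF Suc.prems]] by simp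
  also have "\<dots> = Zn E p k #>\<^bsub>En E p k\<^esub> shift p k ((shift p k ^^ i) (phi E p (Suc k) y))"
    by (rule shift_cls[OF phi_carrier[OF shift_pow_carrier[OF Suc.prems]]
          shift_pow_carrier[OF phi_carrier[OF Suc.prems]] Suc.IH[OF Suc.prems]])
  finally show ?case by simp
qed simp

lemma shift_pow_mod: "a \<in> carrier (En E p n) \<Longrightarrow> (shift p n ^^ (i mod p^n)) a = (shift p n ^^ i) a"
  by (rule funpow_mod_eq[where S="carrier (En E p n)"]) (auto simp: shift_per shift_carrier)

lemma L_cls: "a \<in> carrier (En E p n) \<Longrightarrow> b \<in> carrier (En E p n) \<Longrightarrow> j < p^n \<Longrightarrow>
  Zn E p n #>\<^bsub>En E p n\<^esub> a = Zn E p n #>\<^bsub>En E p n\<^esub> b \<Longrightarrow>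
  Ln E p n #>\<^bsub>Jn E p n\<^esub> (Fn E p n #>\<^bsub>En E p n\<^esub> a, j) = Ln E p n #>\<^bsub>Jn E p n\<^esub> (Fn E p n #>\<^bsub>En E p n\<^esub> b, j)"
proof -
  interpret J: group "Jn E p n" by (rule Jn_group)
  interpret G: group "En E p n" by (rule En_group)
  assume a: "a \<in> carrier (En E p n)" and b: "b \<in> carrier (En E p n)" and j: "j < p^n"
    and h: "Zn E p n #>\<^bsub>En E p n\<^esub> a = Zn E p n #>\<^bsub>En E p n\<^esub> b"
  have "a \<in> Zn E p n #>\<^bsub>En E p n\<^esub> b" using h G.rcos_self[OF a Zn_sub] by simp
  then obtain z where z: "z \<in> Zn E p n" "a = z \<otimes>\<^bsub>En E p n\<^esub> b" unfolding r_coset_def by blast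
  have zc: "z \<in> carrier (En E p n)" using z Zn_carrier by blast
  have e: "(Fn E p n #>\<^bsub>En E p n\<^esub> z, 0) \<otimes>\<^bsub>Jn E p n\<^esub> (Fn E p n #>\<^bsub>En E p n\<^esub> b, j)
     = (Fn E p n #>\<^bsub>En E p n\<^esub> a, j)"
    unfolding Jn_mult[OF zc b] using j z(2) by simp
  have inL: "(Fn E p n #>\<^bsub>En E p n\<^esub> z, 0) \<in> Ln E p n"
    unfolding Ln_def inK_def using z(1) by blast
  have LS: "subgroup (Ln E p n) (Jn E p n)" using Ln_normal normal_imp_subgroup by blast
  have bJ: "(Fn E p n #>\<^bsub>En E p n\<^esub> b, j) \<in> carrier (Jn E p n)"
    using Kn_coset[OF b] j by (simp add: Jn_carrier)
  have "(Fn E p n #>\<^bsub>En E p n\<^esub> a, j) \<in> Ln E p n #>\<^bsub>Jn E p n\<^esub> (Fn E p n #>\<^bsub>En E p n\<^esub> b, j)"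
    using J.rcosI[OF inL subgroup.subset[OF LS] bJ] e by simp
  then show ?thesis using J.repr_independence[OF _ bJ LS] by simp
qed

lemma phi_one: "phi E p (Suc k) \<one>\<^bsub>En E p (Suc k)\<^esub> = \<one>\<^bsub>En E p k\<^esub>"
  unfolding phi_eq En_one
proof (rule restrict_ext)
  fix i assume i: "i \<in> {..<p^k}"
  have e: "map (\<lambda>j. (\<lambda>i\<in>{..<p ^ Suc k}. \<one>) (i + j * p ^ k)) [0..<p] = map (\<lambda>j. \<one>) [0..<p]"
    using i idx by (intro map_cong) auto
  show "prd (map (\<lambda>j. (\<lambda>i\<in>{..<p ^ Suc k}. \<one>) (i + j * p ^ k)) [0..<p]) = \<one>"
    unfolding e by (rule prd_one)
qed

end

context c2p
begin

definition Phi where "Phi k u = (Fn E p k #>\<^bsub>En E p k\<^esub> phi E p (Suc k) (repF (Suc k) (fst u)), snd u mod p^k)"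

lemma part2: "\<exists>h \<in> hom (Jn E p (Suc k) Mod Ln E p (Suc k)) (Jn E p k Mod Ln E p k).
   (\<forall>x \<in> carrier (En E p (Suc k)).
      h (Ln E p (Suc k) #>\<^bsub>Jn E p (Suc k)\<^esub> inK E p (Suc k) x)
        = Ln E p k #>\<^bsub>Jn E p k\<^esub> inK E p k (phi E p (Suc k) x))
   \<and> h (Ln E p (Suc k) #>\<^bsub>Jn E p (Suc k)\<^esub> alpha E p (Suc k)) = Ln E p k #>\<^bsub>Jn E p k\<^esub> alpha E p k"
proof -
  interpret G: group "En E p (Suc k)" by (rule En_group)
  interpret G': group "En E p k" by (rule En_group)
  let ?N = "p^Suc k" and ?M = "p^k"
  have M0: "0 < ?M" by (rule N_pos)
  have rc: "repF (Suc k) (Fn E p (Suc k) #>\<^bsub>En E p (Suc k)\<^esub> x) \<in> carrier (En E p (Suc k))"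
    if "x \<in> carrier (En E p (Suc k))" for x using repF[OF that] by blast
  have Phi_c: "Phi k (Fn E p (Suc k) #>\<^bsub>En E p (Suc k)\<^esub> x, i)
      = (Fn E p k #>\<^bsub>En E p k\<^esub> phi E p (Suc k) (repF (Suc k) (Fn E p (Suc k) #>\<^bsub>En E p (Suc k)\<^esub> x)), i mod ?M)"
    for x i by (simp add: Phi_def)
  have Phi_L: "Ln E p k #>\<^bsub>Jn E p k\<^esub> Phi k (Fn E p (Suc k) #>\<^bsub>En E p (Suc k)\<^esub> x, i)
      = Ln E p k #>\<^bsub>Jn E p k\<^esub> (Fn E p k #>\<^bsub>En E p k\<^esub> phi E p (Suc k) x, i mod ?M)"
    if x: "x \<in> carrier (En E p (Suc k))" for x i
    unfolding Phi_c
    by (rule L_cls[OF phi_carrier[OF rc[OF x]] phi_carrier[OF x] _ rep_Z[OF x]]) (rule mod_less_divisor[OF M0])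
  have "\<exists>\<psi>\<in>hom (Jn E p (Suc k) Mod Ln E p (Suc k)) (Jn E p k Mod Ln E p k).
          \<forall>u\<in>carrier (Jn E p (Suc k)). \<psi> (Ln E p (Suc k) #>\<^bsub>Jn E p (Suc k)\<^esub> u) = Ln E p k #>\<^bsub>Jn E p k\<^esub> Phi k u"
  proof (rule quot_hom[OF Jn_group Jn_group Ln_normal Ln_normal])
    show "Phi k \<in> carrier (Jn E p (Suc k)) \<rightarrow> carrier (Jn E p k)"
    proof
      fix u assume "u \<in> carrier (Jn E p (Suc k))"
      then obtain C i where u: "u = (C, i)" "C \<in> carrier (Kn E p (Suc k))" by (auto simp: Jn_carrier)
      obtain x where x: "x \<in> carrier (En E p (Suc k))" "C = Fn E p (Suc k) #>\<^bsub>En E p (Suc k)\<^esub> x"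
        using Kn_carrier_ex[OF u(2)] by blast
      show "Phi k u \<in> carrier (Jn E p k)"
        unfolding u(1) x(2) Phi_c Jn_carrier using Kn_coset[OF phi_carrier[OF rc[OF x(1)]]] M0 by simp
    qed
  next
    fix u v assume "u \<in> carrier (Jn E p (Suc k))" "v \<in> carrier (Jn E p (Suc k))"
    then obtain C i D j where u: "u = (C, i)" "C \<in> carrier (Kn E p (Suc k))" "i < ?N"
      and v: "v = (D, j)" "D \<in> carrier (Kn E p (Suc k))" "j < ?N" by (auto simp: Jn_carrier)
    obtain x where x: "x \<in> carrier (En E p (Suc k))" "C = Fn E p (Suc k) #>\<^bsub>En E p (Suc k)\<^esub> x"
      using Kn_carrier_ex[OF u(2)] by blast
    obtain y where y: "y \<in> carrier (En E p (Suc k))" "D = Fn E p (Suc k) #>\<^bsub>En E p (Suc k)\<^esub> y"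
      using Kn_carrier_ex[OF v(2)] by blast
    define w where "w = x \<otimes>\<^bsub>En E p (Suc k)\<^esub> (shift p (Suc k) ^^ i) y"
    have wc: "w \<in> carrier (En E p (Suc k))" unfolding w_def using x y shift_pow_carrier by simp
    define rx where "rx = repF (Suc k) (Fn E p (Suc k) #>\<^bsub>En E p (Suc k)\<^esub> x)"
    define ry where "ry = repF (Suc k) (Fn E p (Suc k) #>\<^bsub>En E p (Suc k)\<^esub> y)"
    have rxc: "rx \<in> carrier (En E p (Suc k))" unfolding rx_def by (rule rc[OF x(1)])
    have ryc: "ry \<in> carrier (En E p (Suc k))" unfolding ry_def by (rule rc[OF y(1)])
    have prx: "phi E p (Suc k) rx \<in> carrier (En E p k)" by (rule phi_carrier[OF rxc])
    have pry: "phi E p (Suc k) ry \<in> carrier (En E p k)" by (rule phi_carrier[OF ryc])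
    have uv: "u \<otimes>\<^bsub>Jn E p (Suc k)\<^esub> v = (Fn E p (Suc k) #>\<^bsub>En E p (Suc k)\<^esub> w, (i + j) mod ?N)"
      unfolding u(1) v(1) x(2) y(2) w_def by (rule Jn_mult[OF x(1) y(1)])
    have PuPv: "Phi k u \<otimes>\<^bsub>Jn E p k\<^esub> Phi k v = (Fn E p k #>\<^bsub>En E p k\<^esub>
        (phi E p (Suc k) rx \<otimes>\<^bsub>En E p k\<^esub> (shift p k ^^ (i mod ?M)) (phi E p (Suc k) ry)), (i mod ?M + j mod ?M) mod ?M)"
      unfolding u(1) v(1) x(2) y(2) Phi_c rx_def[symmetric] ry_def[symmetric]
      by (rule Jn_mult[OF prx pry])
    have mods: "((i + j) mod ?N) mod ?M = (i mod ?M + j mod ?M) mod ?M"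
    proof -
      have "?M dvd ?N" by (simp add: le_imp_power_dvd)
      then have "((i + j) mod ?N) mod ?M = (i + j) mod ?M" by (rule mod_mod_cancel)
      then show ?thesis by (simp add: mod_add_eq)
    qed
    have b1: "phi E p (Suc k) rx \<otimes>\<^bsub>En E p k\<^esub> (shift p k ^^ (i mod ?M)) (phi E p (Suc k) ry) \<in> carrier (En E p k)"
      using prx pry shift_pow_carrier by simp
    have sx: "Zn E p k #>\<^bsub>En E p k\<^esub> phi E p (Suc k) x = Zn E p k #>\<^bsub>En E p k\<^esub> phi E p (Suc k) rx"
      using rep_Z[OF x(1)] unfolding rx_def by simp
    have sy: "Zn E p k #>\<^bsub>En E p k\<^esub> phi E p (Suc k) ((shift p (Suc k) ^^ i) y)
        = Zn E p k #>\<^bsub>En E p k\<^esub> (shift p k ^^ (i mod ?M)) (phi E p (Suc k) ry)"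
    proof -
      have "Zn E p k #>\<^bsub>En E p k\<^esub> phi E p (Suc k) ((shift p (Suc k) ^^ i) y)
          = Zn E p k #>\<^bsub>En E p k\<^esub> (shift p k ^^ i) (phi E p (Suc k) y)"
        by (rule phi_shift_pow[OF y(1)])
      also have "\<dots> = Zn E p k #>\<^bsub>En E p k\<^esub> (shift p k ^^ i) (phi E p (Suc k) ry)"
        by (rule shift_pow_cls[OF phi_carrier[OF y(1)] pry]) (use rep_Z[OF y(1)] ry_def in simp)
      also have "\<dots> = Zn E p k #>\<^bsub>En E p k\<^esub> (shift p k ^^ (i mod ?M)) (phi E p (Suc k) ry)"
        using shift_pow_mod[OF pry] by simp
      finally show ?thesis .
    qed
    have Zeq: "Zn E p k #>\<^bsub>En E p k\<^esub> phi E p (Suc k) (repF (Suc k) (Fn E p (Suc k) #>\<^bsub>En E p (Suc k)\<^esub> w))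
        = Zn E p k #>\<^bsub>En E p k\<^esub> (phi E p (Suc k) rx \<otimes>\<^bsub>En E p k\<^esub> (shift p k ^^ (i mod ?M)) (phi E p (Suc k) ry))"
    proof -
      have "Zn E p k #>\<^bsub>En E p k\<^esub> phi E p (Suc k) (repF (Suc k) (Fn E p (Suc k) #>\<^bsub>En E p (Suc k)\<^esub> w))
          = Zn E p k #>\<^bsub>En E p k\<^esub> phi E p (Suc k) w" by (rule rep_Z[OF wc])
      also have "\<dots> = Zn E p k #>\<^bsub>En E p k\<^esub> (phi E p (Suc k) x \<otimes>\<^bsub>En E p k\<^esub> phi E p (Suc k) ((shift p (Suc k) ^^ i) y))"
        unfolding w_def by (rule phi_mult[OF x(1) shift_pow_carrier[OF y(1)]])
      also have "\<dots> = Zn E p k #>\<^bsub>En E p k\<^esub> (phi E p (Suc k) rx \<otimes>\<^bsub>En E p k\<^esub> (shift p k ^^ (i mod ?M)) (phi E p (Suc k) ry))"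
        by (rule Zcls_mult[OF phi_carrier[OF x(1)] prx phi_carrier[OF shift_pow_carrier[OF y(1)]]
              shift_pow_carrier[OF pry] sx sy])
      finally show ?thesis .
    qed
    show "Ln E p k #>\<^bsub>Jn E p k\<^esub> Phi k (u \<otimes>\<^bsub>Jn E p (Suc k)\<^esub> v) = Ln E p k #>\<^bsub>Jn E p k\<^esub> (Phi k u \<otimes>\<^bsub>Jn E p k\<^esub> Phi k v)"
      unfolding PuPv uv Phi_c mods
      by (rule L_cls[OF phi_carrier[OF rc[OF wc]] b1 _ Zeq]) (rule mod_less_divisor[OF M0])
  next
    fix l assume "l \<in> Ln E p (Suc k)"
    then obtain z where z: "z \<in> Zn E p (Suc k)" "l = (Fn E p (Suc k) #>\<^bsub>En E p (Suc k)\<^esub> z, 0)"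
      unfolding Ln_def inK_def by blast
    have zc: "z \<in> carrier (En E p (Suc k))" using z Zn_carrier by blast
    obtain f where f: "f \<in> Fn E p (Suc k)" "repF (Suc k) (Fn E p (Suc k) #>\<^bsub>En E p (Suc k)\<^esub> z) = f \<otimes>\<^bsub>En E p (Suc k)\<^esub> z"
      using repF_mem[OF zc] unfolding r_coset_def by blast
    have "f \<otimes>\<^bsub>En E p (Suc k)\<^esub> z \<in> Zn E p (Suc k)"
      using subgroup.m_closed[OF Zn_sub] f(1) Fn_Zn z(1) by blast
    then have "phi E p (Suc k) (repF (Suc k) (Fn E p (Suc k) #>\<^bsub>En E p (Suc k)\<^esub> z)) \<in> Zn E p k"
      using f(2) phi_Zn by simp
    then show "Phi k l \<in> Ln E p k"
      unfolding z(2) Phi_c Ln_def inK_def by simp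
  qed
  then obtain h where h: "h \<in> hom (Jn E p (Suc k) Mod Ln E p (Suc k)) (Jn E p k Mod Ln E p k)"
    "\<And>u. u \<in> carrier (Jn E p (Suc k)) \<Longrightarrow> h (Ln E p (Suc k) #>\<^bsub>Jn E p (Suc k)\<^esub> u) = Ln E p k #>\<^bsub>Jn E p k\<^esub> Phi k u"
    by blast
  have A: "h (Ln E p (Suc k) #>\<^bsub>Jn E p (Suc k)\<^esub> inK E p (Suc k) x)
        = Ln E p k #>\<^bsub>Jn E p k\<^esub> inK E p k (phi E p (Suc k) x)"
    if x: "x \<in> carrier (En E p (Suc k))" for x
  proof -
    have "inK E p (Suc k) x \<in> carrier (Jn E p (Suc k))"
      unfolding inK_def Jn_carrier using Kn_coset[OF x] p by simp
    then show ?thesis using h(2) Phi_L[OF x, of 0] unfolding inK_def by simp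
  qed
  have B: "h (Ln E p (Suc k) #>\<^bsub>Jn E p (Suc k)\<^esub> alpha E p (Suc k)) = Ln E p k #>\<^bsub>Jn E p k\<^esub> alpha E p k"
  proof -
    have one: "\<one>\<^bsub>En E p (Suc k)\<^esub> \<in> carrier (En E p (Suc k))" by simp
    have F1: "Fn E p (Suc k) #>\<^bsub>En E p (Suc k)\<^esub> \<one>\<^bsub>En E p (Suc k)\<^esub> = Fn E p (Suc k)"
      using G.coset_mult_one[OF Fn_carrier] by simp
    have F1': "Fn E p k #>\<^bsub>En E p k\<^esub> \<one>\<^bsub>En E p k\<^esub> = Fn E p k"
      using G'.coset_mult_one[OF Fn_carrier] by simp
    have aJ: "alpha E p (Suc k) \<in> carrier (Jn E p (Suc k))"
      unfolding alpha_def Jn_carrier using Kn_coset[OF one] F1 mod_less_divisor[OF N_pos[of "Suc k"], of 1] by simp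
    have "h (Ln E p (Suc k) #>\<^bsub>Jn E p (Suc k)\<^esub> alpha E p (Suc k))
        = Ln E p k #>\<^bsub>Jn E p k\<^esub> Phi k (Fn E p (Suc k) #>\<^bsub>En E p (Suc k)\<^esub> \<one>\<^bsub>En E p (Suc k)\<^esub>, 1 mod ?N)"
      using h(2)[OF aJ] F1 by (simp add: alpha_def)
    also have "\<dots> = Ln E p k #>\<^bsub>Jn E p k\<^esub> (Fn E p k #>\<^bsub>En E p k\<^esub> \<one>\<^bsub>En E p k\<^esub>, (1 mod ?N) mod ?M)"
      unfolding Phi_L[OF one] phi_one ..
    also have "(1 mod ?N) mod ?M = 1 mod ?M"
      by (rule mod_mod_cancel) (simp add: le_imp_power_dvd)
    finally show ?thesis unfolding F1' by (simp add: alpha_def)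
  qed
  show ?thesis using h(1) A B by blast
qed

lemma part1: "\<exists>\<psi> \<in> hom (En E p (Suc k) Mod Zn E p (Suc k)) (En E p k Mod Zn E p k).
            \<forall>x \<in> carrier (En E p (Suc k)).
              \<psi> (Zn E p (Suc k) #>\<^bsub>En E p (Suc k)\<^esub> x) = Zn E p k #>\<^bsub>En E p k\<^esub> phi E p (Suc k) x"
  by (rule quot_hom[OF En_group En_group Zn_normal Zn_normal])
     (auto simp: phi_carrier phi_mult phi_Zn)

end

theorem theorem4p3:
  fixes E :: "('a, 'b) monoid_scheme" and p n :: nat
  assumes "group E" and "finite (carrier E)"
    and "Factorial_Ring.prime p" and "\<exists>k. order E = p ^ k"
    and "nilpotency_class_two E"
    and "cyclic_group (E\<lparr>carrier := grp_center E\<rparr>)"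
    and "n \<ge> 1"
  shows "(\<exists>\<psi> \<in> hom (En E p n Mod Zn E p n) (En E p (n - 1) Mod Zn E p (n - 1)).
            \<forall>x \<in> carrier (En E p n).
              \<psi> (Zn E p n #>\<^bsub>En E p n\<^esub> x) = Zn E p (n - 1) #>\<^bsub>En E p (n - 1)\<^esub> phi E p n x)
       \<and> (\<exists>h \<in> hom (Jn E p n Mod Ln E p n) (Jn E p (n - 1) Mod Ln E p (n - 1)).
            (\<forall>x \<in> carrier (En E p n).
               h (Ln E p n #>\<^bsub>Jn E p n\<^esub> inK E p n x)
                 = Ln E p (n - 1) #>\<^bsub>Jn E p (n - 1)\<^esub> inK E p (n - 1) (phi E p n x))
            \<and> h (Ln E p n #>\<^bsub>Jn E p n\<^esub> alpha E p n)
                 = Ln E p (n - 1) #>\<^bsub>Jn E p (n - 1)\<^esub> alpha E p (n - 1))"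
proof -
  interpret c2p E p
  proof (rule c2p.intro)
    show "c2 E"
      using assms(1,5) unfolding nilpotency_class_two_def by (intro c2.intro c2_axioms.intro) auto
    show "c2p_axioms p" using assms(3) by (simp add: c2p_axioms_def prime_gt_0_nat)
  qed
  obtain k where n: "n = Suc k" using assms(7) by (cases n) auto
  show ?thesis unfolding n using part1[of k] part2[of k] by simp
qed

end
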